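(* Let $\psi:C_Z\to\mathbb{R}$ be an increasing convex functional such that for every $X\in C_Z$ there exists $\varepsilon>0$ with $\lim_{z\to+\infty}\psi(X+\varepsilon(Z-z)^+)=\psi(X)$. Then $$\psi(X)=\max_{\mu\in ca^+_Z}\big(\langle X,\mu\rangle-\psi^*_{C_Z}(\mu)\big)\quad\text{for all }X\in C_Z,$$ the supremum being attained.
   Context: Fix integers $J\ge0$, $T\ge1$. $\Omega$ is a non-empty subset of $((0,\infty)\times\mathbb{R}^J)^T$ with the Euclidean metric. $Z:\Omega\to[1,\infty)$ is continuous with $\{\omega\in\Omega:Z(\omega)\le z\}$ compact for every $z\in\mathbb{R}_+$. $C_Z$ is the space of continuous $X:\Omega\to\mathbb{R}$ with $X/Z$ bounded. $ca^+_Z$ is the set of (nonnegative) Borel measures $\mu$ on $\Omega$ with $\langle Z,\mu\rangle:=\int Z\,d\mu<\infty$; $\langle X,\mu\rangle=\int X\,d\mu$. $\psi$ increasing means $\psi(X)\ge\psi(Y)$ whenever $X\ge Y$. $\psi^*_{C_Z}(\mu)=\sup_{X\in C_Z}(\langle X,\mu\rangle-\psi(X))$ for $\mu\in ca^+_Z$. *)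

theory Defs
  imports "HOL-Analysis.Analysis" "HOL-Probability.Probability"
begin

text \<open>Points of Omega live in ((0,oo) x R^J)^T, encoded as vectors indexed by a finite
  type 't (T = CARD('t)) whose entries are pairs (price, R^J-part) with R^J = real^'j.\<close>

type_synonym ('j, 't) state = "(real \<times> (real ^ 'j)) ^ 't"

definition state_space :: "('j::finite, 't::finite) state set" where
  "state_space = {\<omega>. \<forall>t. 0 < fst (\<omega> $ t)}"

definition CZ :: "'a::metric_space set \<Rightarrow> ('a \<Rightarrow> real) \<Rightarrow> ('a \<Rightarrow> real) set" where
  "CZ \<Omega> Z = {X. continuous_on \<Omega> X \<and> (\<exists>c. \<forall>\<omega>\<in>\<Omega>. \<bar>X \<omega> / Z \<omega>\<bar> \<le> c)}"

definition caZ :: "'a::metric_space set \<Rightarrow> ('a \<Rightarrow> real) \<Rightarrow> 'a measure set" where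
  "caZ \<Omega> Z = {\<mu>. sets \<mu> = sets (restrict_space borel \<Omega>) \<and>
                  (\<integral>\<^sup>+ \<omega>. ennreal (Z \<omega>) \<partial>\<mu>) < \<infinity>}"

definition pairing :: "('a \<Rightarrow> real) \<Rightarrow> 'a measure \<Rightarrow> real" where
  "pairing X \<mu> = (\<integral> \<omega>. X \<omega> \<partial>\<mu>)"

definition conj_CZ :: "'a::metric_space set \<Rightarrow> ('a \<Rightarrow> real) \<Rightarrow> (('a \<Rightarrow> real) \<Rightarrow> real)
    \<Rightarrow> 'a measure \<Rightarrow> ereal" where
  "conj_CZ \<Omega> Z \<psi> \<mu> = (SUP X\<in>CZ \<Omega> Z. ereal (pairing X \<mu> - \<psi> X))"

end

theory Submission
  imports Defs
begin

lemma CZ_I: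
  assumes "continuous_on \<Omega> X" "\<And>x. x \<in> \<Omega> \<Longrightarrow> 1 \<le> Z x" "\<And>x. x \<in> \<Omega> \<Longrightarrow> \<bar>X x\<bar> \<le> c * Z x"
  shows "X \<in> CZ \<Omega> Z"
  unfolding CZ_def
proof (intro CollectI conjI exI ballI)
  show "continuous_on \<Omega> X" by fact
  fix x assume x: "x \<in> \<Omega>"
  have "0 < Z x" using assms(2)[OF x] by simp
  then show "\<bar>X x / Z x\<bar> \<le> c" using assms(3)[OF x]
    by (simp add: abs_div divide_le_eq)
qed

lemma CZ_E:
  assumes "X \<in> CZ \<Omega> Z" "\<And>x. x \<in> \<Omega> \<Longrightarrow> 1 \<le> Z x"
  obtains c where "0 \<le> c" "\<And>x. x \<in> \<Omega> \<Longrightarrow> \<bar>X x\<bar> \<le> c * Z x"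
proof -
  obtain c where c: "\<And>x. x \<in> \<Omega> \<Longrightarrow> \<bar>X x / Z x\<bar> \<le> c" using assms(1) unfolding CZ_def by auto
  have "\<bar>X x\<bar> \<le> max c 0 * Z x" if x: "x \<in> \<Omega>" for x
  proof -
    have "0 < Z x" using assms(2)[OF x] by simp
    then have "\<bar>X x\<bar> \<le> c * Z x" using c[OF x] by (simp add: abs_div divide_le_eq)
    also have "\<dots> \<le> max c 0 * Z x" using \<open>0 < Z x\<close> by (intro mult_right_mono) auto
    finally show ?thesis .
  qed
  then show ?thesis using that[of "max c 0"] by auto
qed

lemma CZ_cont: "X \<in> CZ \<Omega> Z \<Longrightarrow> continuous_on \<Omega> X"
  unfolding CZ_def by auto

locale riesz =
  fixes \<Omega> :: "'a::metric_space set" and Z :: "'a \<Rightarrow> real" and L :: "('a \<Rightarrow> real) \<Rightarrow> real"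
  assumes Z_cont: "continuous_on \<Omega> Z" and Z_ge1: "\<And>x. x \<in> \<Omega> \<Longrightarrow> 1 \<le> Z x"
    and Z_sub: "\<And>z. 0 \<le> z \<Longrightarrow> compact {x\<in>\<Omega>. Z x \<le> z}"
    and L_add: "\<And>f g. f \<in> CZ \<Omega> Z \<Longrightarrow> g \<in> CZ \<Omega> Z \<Longrightarrow> L (\<lambda>x. f x + g x) = L f + L g"
    and L_scale: "\<And>f c. f \<in> CZ \<Omega> Z \<Longrightarrow> L (\<lambda>x. c * f x) = c * L f"
    and L_pos: "\<And>f. f \<in> CZ \<Omega> Z \<Longrightarrow> (\<And>x. x \<in> \<Omega> \<Longrightarrow> 0 \<le> f x) \<Longrightarrow> 0 \<le> L f"
    and tail: "((\<lambda>z. L (\<lambda>x. max (Z x - z) 0)) \<longlongrightarrow> 0) at_top"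
begin

abbreviation "V \<equiv> CZ \<Omega> Z"

lemma V_I: "continuous_on \<Omega> X \<Longrightarrow> (\<And>x. x \<in> \<Omega> \<Longrightarrow> \<bar>X x\<bar> \<le> c * Z x) \<Longrightarrow> X \<in> V"
  using CZ_I Z_ge1 by blast

lemma V_E: assumes "X \<in> V" obtains c where "0 \<le> c" "\<And>x. x \<in> \<Omega> \<Longrightarrow> \<bar>X x\<bar> \<le> c * Z x"
  using CZ_E[OF assms Z_ge1] by blast

lemma V_bdd: assumes "continuous_on \<Omega> X" "\<And>x. x \<in> \<Omega> \<Longrightarrow> \<bar>X x\<bar> \<le> c" shows "X \<in> V"
proof (rule V_I[OF assms(1)])
  fix x assume x: "x \<in> \<Omega>"
  have "\<bar>X x\<bar> \<le> \<bar>c\<bar>" using assms(2)[OF x] by simp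
  also have "\<dots> \<le> \<bar>c\<bar> * Z x" using Z_ge1[OF x] by (simp add: mult_le_cancel_left1)
  finally show "\<bar>X x\<bar> \<le> \<bar>c\<bar> * Z x" .
qed

lemma V_const: "(\<lambda>x. c) \<in> V"
  by (rule V_bdd[of _ "\<bar>c\<bar>"]) (auto intro: continuous_on_const)

lemma V_Z: "Z \<in> V"
  by (rule V_I[OF Z_cont, of 1]) (use Z_ge1 in force)

lemma V_add: assumes "f \<in> V" "g \<in> V" shows "(\<lambda>x. f x + g x) \<in> V"
proof -
  obtain a b where ab: "\<And>x. x \<in> \<Omega> \<Longrightarrow> \<bar>f x\<bar> \<le> a * Z x" "\<And>x. x \<in> \<Omega> \<Longrightarrow> \<bar>g x\<bar> \<le> b * Z x"
    using V_E[OF assms(1)] V_E[OF assms(2)] by metis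
  show ?thesis
    by (rule V_I[of _ "a + b"]) (use assms CZ_cont ab in \<open>auto intro!: continuous_intros simp: distrib_right intro: order.trans[OF abs_triangle_ineq add_mono]\<close>)
qed

lemma V_scale: assumes "f \<in> V" shows "(\<lambda>x. c * f x) \<in> V"
proof -
  obtain a where a: "\<And>x. x \<in> \<Omega> \<Longrightarrow> \<bar>f x\<bar> \<le> a * Z x"
    using V_E[OF assms(1)] by metis
  show ?thesis
    by (rule V_I[of _ "\<bar>c\<bar> * a"]) (use assms CZ_cont a in \<open>auto intro!: continuous_intros simp: abs_mult mult.assoc intro: mult_left_mono\<close>)
qed

lemma V_minus: "f \<in> V \<Longrightarrow> (\<lambda>x. - f x) \<in> V"
  using V_scale[of f "-1"] by simp

lemma V_diff: "f \<in> V \<Longrightarrow> g \<in> V \<Longrightarrow> (\<lambda>x. f x - g x) \<in> V"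
  using V_add[OF _ V_minus] by simp

lemma V_max: assumes "f \<in> V" "g \<in> V" shows "(\<lambda>x. max (f x) (g x)) \<in> V"
proof -
  obtain a b where ab: "\<And>x. x \<in> \<Omega> \<Longrightarrow> \<bar>f x\<bar> \<le> a * Z x" "\<And>x. x \<in> \<Omega> \<Longrightarrow> \<bar>g x\<bar> \<le> b * Z x"
    "0 \<le> a" "0 \<le> b"
    using V_E[OF assms(1)] V_E[OF assms(2)] by metis
  show ?thesis
  proof (rule V_I[of _ "a + b"])
    show "continuous_on \<Omega> (\<lambda>x. max (f x) (g x))" using assms CZ_cont by (auto intro!: continuous_intros)
    fix x assume x: "x \<in> \<Omega>"
    have "0 \<le> a * Z x" "0 \<le> b * Z x" using ab(3,4) Z_ge1[OF x] by auto
    then show "\<bar>max (f x) (g x)\<bar> \<le> (a + b) * Z x" using ab(1,2)[OF x] by (auto simp: distrib_right)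
  qed
qed

lemma V_min: assumes "f \<in> V" "g \<in> V" shows "(\<lambda>x. min (f x) (g x)) \<in> V"
proof -
  have "(\<lambda>x. - max (- f x) (- g x)) \<in> V" using V_minus V_max assms by blast
  moreover have "(\<lambda>x. - max (- f x) (- g x)) = (\<lambda>x. min (f x) (g x))" by (auto simp: fun_eq_iff)
  ultimately show ?thesis by simp
qed

lemma V_sum: "finite I \<Longrightarrow> (\<And>i. i \<in> I \<Longrightarrow> g i \<in> V) \<Longrightarrow> (\<lambda>x. \<Sum>i\<in>I. g i x) \<in> V"
proof (induction I rule: finite_induct)
  case empty then show ?case using V_const[of 0] by simp
next
  case (insert a F) then show ?case using V_add[of "g a" "\<lambda>x. \<Sum>i\<in>F. g i x"] by simp
qed

lemma L_zero: "L (\<lambda>x. 0) = 0"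
  using L_scale[OF V_const, of 0 0] by simp

lemma L_minus: "f \<in> V \<Longrightarrow> L (\<lambda>x. - f x) = - L f"
  using L_scale[of f "-1"] by simp

lemma L_diff: "f \<in> V \<Longrightarrow> g \<in> V \<Longrightarrow> L (\<lambda>x. f x - g x) = L f - L g"
  using L_add[OF _ V_minus, of f g] L_minus[of g] by simp

lemma L_mono: assumes "f \<in> V" "g \<in> V" "\<And>x. x \<in> \<Omega> \<Longrightarrow> f x \<le> g x" shows "L f \<le> L g"
  using L_pos[OF V_diff[OF assms(2,1)]] L_diff[OF assms(2,1)] assms(3) by fastforce

lemma L_cong: assumes "f \<in> V" "g \<in> V" "\<And>x. x \<in> \<Omega> \<Longrightarrow> f x = g x" shows "L f = L g"
  using L_mono[OF assms(1,2)] L_mono[OF assms(2,1)] assms(3) by fastforce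

lemma L_sum: "finite I \<Longrightarrow> (\<And>i. i \<in> I \<Longrightarrow> g i \<in> V) \<Longrightarrow> L (\<lambda>x. \<Sum>i\<in>I. g i x) = (\<Sum>i\<in>I. L (g i))"
proof (induction I rule: finite_induct)
  case empty then show ?case using L_zero by simp
next
  case (insert a F) then show ?case using L_add[of "g a" "\<lambda>x. \<Sum>i\<in>F. g i x"] V_sum[of F g] by simp
qed

lemma L1_nonneg: "0 \<le> L (\<lambda>x. 1)"
  by (rule L_pos[OF V_const]) simp

end

lemma open_dist_fun:
  fixes G :: "'a::metric_space set"
  assumes "open G"
  obtains d :: "'a \<Rightarrow> real" where "continuous_on UNIV d" "\<And>x. 0 \<le> d x" "\<And>x. 0 < d x \<longleftrightarrow> x \<in> G"
proof (cases "G = UNIV")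
  case True then show ?thesis using that[of "\<lambda>x. 1"] by (auto intro: continuous_on_const)
next
  case False
  have cl: "closed (- G)" using assms by auto
  have ne: "- G \<noteq> {}" using False by auto
  show ?thesis
  proof (rule that[of "\<lambda>x. infdist x (- G)"])
    show "continuous_on UNIV (\<lambda>x. infdist x (- G))" by (intro continuous_at_imp_continuous_on ballI continuous_intros)
    show "\<And>x. 0 \<le> infdist x (- G)" by (rule infdist_nonneg)
    fix x show "0 < infdist x (- G) \<longleftrightarrow> x \<in> G"
      using in_closed_iff_infdist_zero[OF cl ne, of x] infdist_nonneg[of x "- G"] by auto
  qed
qed

lemma cont_frac:
  fixes f d1 d2 :: "'a::metric_space \<Rightarrow> real"
  assumes f: "continuous_on S f" and d1: "continuous_on UNIV d1" and d2: "continuous_on UNIV d2"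
    and nn: "\<And>x. 0 \<le> d1 x" "\<And>x. 0 \<le> d2 x"
    and z: "\<And>x. x \<in> S \<Longrightarrow> d1 x + d2 x = 0 \<Longrightarrow> f x = 0"
  shows "continuous_on S (\<lambda>x. f x * (d1 x / (d1 x + d2 x)))"
proof -
  have bnd: "\<bar>f x * (d1 x / (d1 x + d2 x))\<bar> \<le> \<bar>f x\<bar>" for x
  proof -
    define r where "r = d1 x / (d1 x + d2 x)"
    have r: "0 \<le> r" "r \<le> 1"
      using nn[of x] by (auto simp: divide_le_eq r_def)
    have "\<bar>f x * r\<bar> \<le> \<bar>f x\<bar>"
      using r by (simp only: abs_mult abs_of_nonneg[OF r(1)]) (rule mult_left_le[OF _ abs_ge_zero])
    then show ?thesis by (simp only: r_def)
  qed
  show ?thesis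
  unfolding continuous_on_eq_continuous_within
  proof
    fix x assume x: "x \<in> S"
    have fx: "continuous (at x within S) f" using f x continuous_on_eq_continuous_within by blast
    have d1x: "continuous (at x within S) d1" "continuous (at x within S) d2"
      using d1 d2 by (auto intro: continuous_at_imp_continuous_at_within simp: continuous_on_eq_continuous_at)
    show "continuous (at x within S) (\<lambda>x. f x * (d1 x / (d1 x + d2 x)))"
    proof (cases "d1 x + d2 x = 0")
      case False
      then show ?thesis using fx d1x by (intro continuous_intros) auto
    next
      case True
      then have f0: "f x = 0" using z x by auto
      have "((\<lambda>y. f y * (d1 y / (d1 y + d2 y))) \<longlongrightarrow> 0) (at x within S)"
      proof (rule Lim_null_comparison)
        show "\<forall>\<^sub>F y in at x within S. norm (f y * (d1 y / (d1 y + d2 y))) \<le> \<bar>f y\<bar>"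
          using bnd by simp
        have "(f \<longlongrightarrow> 0) (at x within S)" using fx f0 by (simp add: continuous_within)
        then show "((\<lambda>y. \<bar>f y\<bar>) \<longlongrightarrow> 0) (at x within S)" by (rule tendsto_rabs_zero)
      qed
      then show ?thesis using f0 True by (simp add: continuous_within)
    qed
  qed
qed

context riesz begin

definition F :: "'a set \<Rightarrow> ('a \<Rightarrow> real) set" where
  "F U = {f\<in>V. \<forall>x\<in>\<Omega>. 0 \<le> f x \<and> f x \<le> 1 \<and> (x \<notin> U \<longrightarrow> f x = 0)}"
definition nu :: "'a set \<Rightarrow> ennreal" where "nu U = (SUP f\<in>F U. ennreal (L f))"
definition ropen :: "'a set \<Rightarrow> bool" where "ropen U \<longleftrightarrow> (\<exists>G. open G \<and> U = \<Omega> \<inter> G)"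
definition om :: "'a set \<Rightarrow> ennreal" where "om A = (INF U\<in>{U. ropen U \<and> A \<subseteq> U}. nu U)"

abbreviation "L1 \<equiv> L (\<lambda>x. 1)"

lemma F_zero: "(\<lambda>x. 0) \<in> F U"
  unfolding F_def using V_const by auto

lemma F_mono: "U \<subseteq> U' \<Longrightarrow> F U \<subseteq> F U'"
  unfolding F_def by auto

lemma F_le1: "f \<in> F U \<Longrightarrow> L f \<le> L1"
  by (rule L_mono) (auto simp: F_def V_const)

lemma F_nonneg: "f \<in> F U \<Longrightarrow> 0 \<le> L f"
  by (rule L_pos) (auto simp: F_def)

lemma nu_ge: "f \<in> F U \<Longrightarrow> ennreal (L f) \<le> nu U"
  unfolding nu_def by (rule SUP_upper)

lemma nu_le: "nu U \<le> ennreal L1"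
  unfolding nu_def by (rule SUP_least) (auto intro!: ennreal_leI F_le1)

lemma nu_fin: "nu U < \<infinity>"
  using nu_le[of U] by (simp add: le_less_trans)

lemma nu_mono: "U \<subseteq> U' \<Longrightarrow> nu U \<le> nu U'"
  unfolding nu_def by (rule SUP_subset_mono) (auto dest: F_mono)

lemma nu_Omega: "nu \<Omega> = ennreal L1"
proof (rule antisym[OF nu_le])
  have "(\<lambda>x. 1) \<in> F \<Omega>" unfolding F_def using V_const by auto
  then show "ennreal L1 \<le> nu \<Omega>" by (rule nu_ge)
qed

lemma nu_empty: "nu {} = 0"
proof -
  have "L f = 0" if "f \<in> F {}" for f
  proof -
    have "L f = L (\<lambda>x. 0)" using that by (intro L_cong) (auto simp: F_def V_const)
    then show ?thesis using L_zero by simp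
  qed
  then have "nu {} = (SUP f\<in>F {}. 0)" unfolding nu_def by (intro SUP_cong) auto
  also have "\<dots> = 0" using F_zero[of "{}"] by (intro SUP_const) auto
  finally show ?thesis .
qed

lemma ropen_Omega: "ropen \<Omega>" unfolding ropen_def by (intro exI[of _ UNIV]) auto
lemma ropen_empty: "ropen {}" unfolding ropen_def by (intro exI[of _ "{}"]) auto
lemma ropen_sub: "ropen U \<Longrightarrow> U \<subseteq> \<Omega>" unfolding ropen_def by auto
lemma ropen_Un: "ropen U \<Longrightarrow> ropen W \<Longrightarrow> ropen (U \<union> W)"
  unfolding ropen_def by (metis Int_Un_distrib open_Un)
lemma ropen_Int: "ropen U \<Longrightarrow> ropen W \<Longrightarrow> ropen (U \<inter> W)"
  unfolding ropen_def by (metis inf_assoc inf_commute inf_left_idem open_Int)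
lemma ropen_UN:
  assumes "\<And>i. i \<in> I \<Longrightarrow> ropen (U i)" shows "ropen (\<Union>i\<in>I. U i)"
proof -
  obtain G where G: "\<And>i. i \<in> I \<Longrightarrow> open (G i) \<and> U i = \<Omega> \<inter> G i"
    using assms unfolding ropen_def by metis
  show ?thesis unfolding ropen_def
    by (intro exI[of _ "\<Union>i\<in>I. G i"]) (use G in auto)
qed

lemma nu_Un:
  assumes U: "ropen U" and W: "ropen W"
  shows "nu (U \<union> W) \<le> nu U + nu W"
  unfolding nu_def[of "U \<union> W"]
proof (rule SUP_least)
  fix f assume f: "f \<in> F (U \<union> W)"
  obtain G1 G2 where G: "open G1" "U = \<Omega> \<inter> G1" "open G2" "W = \<Omega> \<inter> G2"
    using U W unfolding ropen_def by auto
  obtain d1 :: "'a \<Rightarrow> real" where d1: "continuous_on UNIV d1" "\<And>x. 0 \<le> d1 x" "\<And>x. 0 < d1 x \<longleftrightarrow> x \<in> G1"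
    using open_dist_fun[OF G(1)] by metis
  obtain d2 :: "'a \<Rightarrow> real" where d2: "continuous_on UNIV d2" "\<And>x. 0 \<le> d2 x" "\<And>x. 0 < d2 x \<longleftrightarrow> x \<in> G2"
    using open_dist_fun[OF G(3)] by metis
  have fV: "f \<in> V" and fp: "\<And>x. x \<in> \<Omega> \<Longrightarrow> 0 \<le> f x \<and> f x \<le> 1 \<and> (x \<notin> U \<union> W \<longrightarrow> f x = 0)"
    using f unfolding F_def by auto
  have z: "f x = 0" if "x \<in> \<Omega>" "d1 x + d2 x = 0" for x
  proof -
    have "d1 x = 0" "d2 x = 0" using that(2) d1(2)[of x] d2(2)[of x] by auto
    then have "x \<notin> U \<union> W" using d1(3)[of x] d2(3)[of x] G by auto
    then show ?thesis using fp[OF that(1)] by auto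
  qed
  have z': "f x = 0" if "x \<in> \<Omega>" "d2 x + d1 x = 0" for x using z[OF that(1)] that(2) by (simp add: add.commute)
  define f1 where "f1 = (\<lambda>x. f x * (d1 x / (d1 x + d2 x)))"
  define f2 where "f2 = (\<lambda>x. f x * (d2 x / (d2 x + d1 x)))"
  have c1: "continuous_on \<Omega> f1" unfolding f1_def
    by (rule cont_frac[OF CZ_cont[OF fV] d1(1) d2(1) d1(2) d2(2) z])
  have c2: "continuous_on \<Omega> f2" unfolding f2_def
    by (rule cont_frac[OF CZ_cont[OF fV] d2(1) d1(1) d2(2) d1(2) z'])
  have r1: "0 \<le> d1 x / (d1 x + d2 x)" "d1 x / (d1 x + d2 x) \<le> 1" for x
    using d1(2)[of x] d2(2)[of x] by (auto simp: divide_le_eq)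
  have r2: "0 \<le> d2 x / (d2 x + d1 x)" "d2 x / (d2 x + d1 x) \<le> 1" for x
    using d1(2)[of x] d2(2)[of x] by (auto simp: divide_le_eq)
  have f1F: "f1 \<in> F U"
    unfolding F_def
  proof (intro CollectI conjI ballI)
    have p: "0 \<le> f1 x \<and> f1 x \<le> 1" if x: "x \<in> \<Omega>" for x
      using fp[OF x] r1[of x] unfolding f1_def by (intro conjI mult_nonneg_nonneg mult_le_one) auto
    show "f1 \<in> V" by (rule V_bdd[OF c1, of 1]) (use p in force)
    fix x assume x: "x \<in> \<Omega>"
    show "0 \<le> f1 x" "f1 x \<le> 1" using p[OF x] by auto
    show "x \<notin> U \<longrightarrow> f1 x = 0" using d1(3)[of x] d1(2)[of x] G(2) x by (auto simp: f1_def)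
  qed
  have f2F: "f2 \<in> F W"
    unfolding F_def
  proof (intro CollectI conjI ballI)
    have p: "0 \<le> f2 x \<and> f2 x \<le> 1" if x: "x \<in> \<Omega>" for x
      using fp[OF x] r2[of x] unfolding f2_def by (intro conjI mult_nonneg_nonneg mult_le_one) auto
    show "f2 \<in> V" by (rule V_bdd[OF c2, of 1]) (use p in force)
    fix x assume x: "x \<in> \<Omega>"
    show "0 \<le> f2 x" "f2 x \<le> 1" using p[OF x] by auto
    show "x \<notin> W \<longrightarrow> f2 x = 0" using d2(3)[of x] d2(2)[of x] G(4) x by (auto simp: f2_def)
  qed
  have V1: "f1 \<in> V" and V2: "f2 \<in> V" using f1F f2F by (auto simp: F_def)
  have "L f = L (\<lambda>x. f1 x + f2 x)"
  proof (rule L_cong[OF fV V_add[OF V1 V2]])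
    fix x assume x: "x \<in> \<Omega>"
    show "f x = f1 x + f2 x"
    proof (cases "d1 x + d2 x = 0")
      case True then show ?thesis using z[OF x] by (simp add: f1_def f2_def add.commute)
    next
      case False
      then have "d1 x / (d1 x + d2 x) + d2 x / (d2 x + d1 x) = 1"
        by (simp add: add.commute add_divide_distrib[symmetric])
      then show ?thesis unfolding f1_def f2_def by (metis distrib_left mult.right_neutral)
    qed
  qed
  also have "\<dots> = L f1 + L f2" by (rule L_add[OF V1 V2])
  finally have "ennreal (L f) = ennreal (L f1) + ennreal (L f2)"
    using F_nonneg[OF f1F] F_nonneg[OF f2F] by (simp add: ennreal_plus)
  also have "\<dots> \<le> nu U + nu W" by (intro add_mono nu_ge f1F f2F)
  finally show "ennreal (L f) \<le> nu U + nu W" .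
qed

end

context riesz begin

abbreviation "tlf z \<equiv> (\<lambda>x. max (Z x - z) 0)"

lemma V_tl: "tlf z \<in> V"
  using V_max[OF V_diff[OF V_Z V_const] V_const] by simp

lemma L_tl_nonneg: "0 \<le> L (tlf z)"
  by (rule L_pos[OF V_tl]) auto

lemma F_V: "f \<in> F A \<Longrightarrow> f \<in> V" by (simp add: F_def)

lemma F_supp: assumes "f \<in> F A" "\<And>x. x \<in> \<Omega> \<Longrightarrow> f x \<noteq> 0 \<Longrightarrow> x \<in> B" shows "f \<in> F B"
  using assms unfolding F_def by auto

lemma compact_red:
  assumes f: "f \<in> F A" and e: "0 < e" and z: "0 \<le> z"
  obtains g K where "g \<in> F A" "compact K" "K \<subseteq> \<Omega>" "\<And>x. x \<in> \<Omega> \<Longrightarrow> g x \<noteq> 0 \<Longrightarrow> x \<in> K"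
    "\<And>x. x \<in> K \<Longrightarrow> e \<le> f x" "L f \<le> L g + e * L1 + L (tlf z)"
proof -
  have fV: "f \<in> V" and fp: "\<And>x. x \<in> \<Omega> \<Longrightarrow> 0 \<le> f x \<and> f x \<le> 1 \<and> (x \<notin> A \<longrightarrow> f x = 0)"
    using f unfolding F_def by auto
  define g where "g = (\<lambda>x. max (f x - e - max (Z x - z) 0) 0)"
  define S where "S = {x\<in>\<Omega>. Z x \<le> z + 1}"
  define K where "K = S \<inter> f -` {e..}"
  have gV: "g \<in> V" unfolding g_def
    using V_max[OF V_diff[OF V_diff[OF fV V_const] V_tl] V_const] by simp
  have "compact S" unfolding S_def using Z_sub[of "z+1"] z by simp
  moreover have "closedin (top_of_set S) K" unfolding K_def
    by (rule continuous_closedin_preimage) (auto intro: continuous_on_subset[OF CZ_cont[OF fV]] simp: S_def)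
  ultimately have cK: "compact K" by (rule closedin_compact)
  show ?thesis
  proof (rule that[of g K, OF _ cK])
    have "0 \<le> g x \<and> g x \<le> 1 \<and> (x \<notin> A \<longrightarrow> g x = 0)" if x: "x \<in> \<Omega>" for x
      using fp[OF x] e by (auto simp: g_def max_def)
    then show "g \<in> F A" unfolding F_def using gV by auto
    show "K \<subseteq> \<Omega>" by (auto simp: K_def S_def)
    show "\<And>x. x \<in> K \<Longrightarrow> e \<le> f x" by (auto simp: K_def)
    fix x assume x: "x \<in> \<Omega>"
    show "g x \<noteq> 0 \<Longrightarrow> x \<in> K" using fp[OF x] x e by (auto simp: g_def K_def S_def max_def split: if_splits)
  next
    have "L f \<le> L (\<lambda>x. g x + (e + tlf z x))"
      by (rule L_mono[OF fV V_add[OF gV V_add[OF V_const[of e] V_tl[of z]]]]) (auto simp: g_def)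
    also have "\<dots> = L g + e * L1 + L (tlf z)"
      using L_add[OF gV V_add[OF V_const[of e] V_tl[of z]]] L_add[OF V_const[of e] V_tl[of z]]
        L_scale[OF V_const[of 1], of e] by simp
    finally show "L f \<le> L g + e * L1 + L (tlf z)" .
  qed
qed

lemma nu_UN_fin:
  fixes U :: "nat \<Rightarrow> 'a set"
  assumes "\<And>n. ropen (U n)" shows "nu (\<Union>n\<le>N. U n) \<le> (\<Sum>n\<le>N. nu (U n))"
proof (induction N)
  case 0 then show ?case by simp
next
  case (Suc N)
  have "(\<Union>n\<le>Suc N. U n) = (\<Union>n\<le>N. U n) \<union> U (Suc N)" by (auto simp: atMost_Suc)
  then have "nu (\<Union>n\<le>Suc N. U n) \<le> nu (\<Union>n\<le>N. U n) + nu (U (Suc N))"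
    using nu_Un[OF ropen_UN[of "{..N}" U] assms] assms by simp
  also have "\<dots> \<le> (\<Sum>n\<le>N. nu (U n)) + nu (U (Suc N))" using Suc by (intro add_mono) auto
  finally show ?case by simp
qed

lemma tail_small:
  assumes "0 < e" obtains z where "0 \<le> z" "L (tlf z) < e"
proof -
  have "eventually (\<lambda>z. L (tlf z) < e) at_top"
    using order_tendstoD(2)[OF tail assms] .
  then obtain N where N: "\<And>z. z \<ge> N \<Longrightarrow> L (tlf z) < e" by (auto simp: eventually_at_top_linorder)
  show ?thesis using that[of "max N 0"] N[of "max N 0"] by auto
qed

lemma nu_UN:
  fixes U :: "nat \<Rightarrow> 'a set"
  assumes U: "\<And>n. ropen (U n)" shows "nu (\<Union>n. U n) \<le> (\<Sum>n. nu (U n))"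
  unfolding nu_def[of "\<Union>n. U n"]
proof (rule SUP_least)
  fix f assume f: "f \<in> F (\<Union>n. U n)"
  obtain G where G: "\<And>n. open (G n)" "\<And>n. U n = \<Omega> \<inter> G n"
    using U unfolding ropen_def by metis
  show "ennreal (L f) \<le> (\<Sum>n. nu (U n))"
  proof (rule ennreal_le_epsilon)
    fix e :: real assume e: "0 < e"
    obtain z where z: "0 \<le> z" "L (tlf z) < e / 2" using tail_small[of "e/2"] e by auto
    define \<epsilon> where "\<epsilon> = e / (2 * (L1 + 1))"
    have \<epsilon>: "0 < \<epsilon>" unfolding \<epsilon>_def using e L1_nonneg by auto
    have \<epsilon>L: "\<epsilon> * L1 \<le> e / 2" unfolding \<epsilon>_def using e L1_nonneg by (simp add: field_simps)
    obtain g K where gK: "g \<in> F (\<Union>n. U n)" "compact K" "K \<subseteq> \<Omega>" "\<And>x. x \<in> \<Omega> \<Longrightarrow> g x \<noteq> 0 \<Longrightarrow> x \<in> K"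
      "\<And>x. x \<in> K \<Longrightarrow> \<epsilon> \<le> f x" "L f \<le> L g + \<epsilon> * L1 + L (tlf z)"
      using compact_red[OF f \<epsilon> z(1)] by metis
    have "K \<subseteq> (\<Union>n\<in>UNIV. G n)"
    proof
      fix x assume x: "x \<in> K"
      then have "f x \<noteq> 0" using gK(5)[OF x] \<epsilon> by auto
      then have "x \<in> (\<Union>n. U n)" using f gK(3) x unfolding F_def by auto
      then show "x \<in> (\<Union>n\<in>UNIV. G n)" using G by auto
    qed
    then obtain J where J: "finite J" "K \<subseteq> (\<Union>n\<in>J. G n)"
      using compactE_image[OF gK(2), of UNIV G] G(1) by metis
    define N where "N = Max (insert 0 J)"
    have JN: "J \<subseteq> {..N}" unfolding N_def using J(1) by auto
    have gF: "g \<in> F (\<Union>n\<le>N. U n)"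
    proof (rule F_supp[OF gK(1)])
      fix x assume "x \<in> \<Omega>" "g x \<noteq> 0"
      then have "x \<in> K" "x \<in> \<Omega>" using gK(4) by auto
      then show "x \<in> (\<Union>n\<le>N. U n)" using J(2) JN G(2) by blast
    qed
    have "ennreal (L f) \<le> ennreal (L g + e)"
      using gK(6) \<epsilon>L z(2) by (intro ennreal_leI) simp
    also have "\<dots> = ennreal (L g) + ennreal e"
      using F_nonneg[OF gK(1)] e by (simp add: ennreal_plus)
    also have "\<dots> \<le> (\<Sum>n. nu (U n)) + ennreal e"
    proof (intro add_mono order_refl)
      have "ennreal (L g) \<le> nu (\<Union>n\<le>N. U n)" by (rule nu_ge[OF gF])
      also have "\<dots> \<le> (\<Sum>n\<le>N. nu (U n))" by (rule nu_UN_fin[OF U])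
      also have "\<dots> \<le> (\<Sum>n. nu (U n))" by (rule sum_le_suminf[OF summableI]) auto
      finally show "ennreal (L g) \<le> (\<Sum>n. nu (U n))" .
    qed
    finally show "ennreal (L f) \<le> (\<Sum>n. nu (U n)) + ennreal e" .
  qed
qed

lemma om_le_nu: "ropen U \<Longrightarrow> A \<subseteq> U \<Longrightarrow> om A \<le> nu U"
  unfolding om_def by (rule INF_lower) auto

lemma om_ropen: "ropen U \<Longrightarrow> om U = nu U"
  by (rule antisym[OF om_le_nu]) (auto simp: om_def intro!: INF_greatest nu_mono)

lemma om_mono: "A \<subseteq> B \<Longrightarrow> om A \<le> om B"
  unfolding om_def by (rule INF_superset_mono) auto

lemma om_empty: "om {} = 0"
  using om_le_nu[OF ropen_empty, of "{}"] nu_empty by simp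

lemma om_fin: "A \<subseteq> \<Omega> \<Longrightarrow> om A \<le> ennreal L1"
  using om_le_nu[OF ropen_Omega, of A] nu_Omega by simp

lemma om_approx:
  assumes A: "A \<subseteq> \<Omega>" and e: "0 < e"
  obtains U where "ropen U" "A \<subseteq> U" "nu U \<le> om A + ennreal e"
proof -
  have fin: "om A < \<infinity>" using om_fin[OF A] by (simp add: le_less_trans)
  have "om A < om A + ennreal e" using fin e by (simp add: ennreal_add_left_cancel_less)
  then obtain U where "U \<in> {U. ropen U \<and> A \<subseteq> U}" "nu U < om A + ennreal e"
    unfolding om_def[of A] by (subst (asm) INF_less_iff) auto
  then show ?thesis using that by auto
qed

lemma om_csubadd:
  fixes A :: "nat \<Rightarrow> 'a set"
  assumes A: "\<And>i. A i \<subseteq> \<Omega>" shows "om (\<Union>i. A i) \<le> (\<Sum>i. om (A i))"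
proof (rule ennreal_le_epsilon)
  fix e :: real assume e: "0 < e"
  have "\<forall>i. \<exists>U. ropen U \<and> A i \<subseteq> U \<and> nu U \<le> om (A i) + ennreal (e * (1/2)^Suc i)"
  proof
    fix i
    have "0 < e * (1/2)^Suc i" using e by simp
    from om_approx[OF A this] show "\<exists>U. ropen U \<and> A i \<subseteq> U \<and> nu U \<le> om (A i) + ennreal (e * (1/2)^Suc i)"
      by metis
  qed
  then obtain U where U: "\<And>i. ropen (U i)" "\<And>i. A i \<subseteq> U i"
      "\<And>i. nu (U i) \<le> om (A i) + ennreal (e * (1/2)^Suc i)" by metis
  have "om (\<Union>i. A i) \<le> nu (\<Union>i. U i)"
    using U(2) by (intro om_le_nu ropen_UN U(1)) auto
  also have "\<dots> \<le> (\<Sum>i. nu (U i))" by (rule nu_UN[OF U(1)])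
  also have "\<dots> \<le> (\<Sum>i. om (A i) + ennreal (e * (1/2)^Suc i))"
    by (intro suminf_le[OF U(3) summableI summableI])
  also have "\<dots> = (\<Sum>i. om (A i)) + (\<Sum>i. ennreal (e * (1/2)^Suc i))"
    by (rule suminf_add[OF summableI summableI, symmetric])
  also have "(\<Sum>i. ennreal (e * (1/2)^Suc i)) = ennreal (\<Sum>i. e * (1/2)^Suc i)"
    using e by (intro suminf_ennreal2 summable_mult sums_summable[OF power_half_series]) auto
  also have "(\<Sum>i. e * (1/2)^Suc i) = e"
    using suminf_mult[OF sums_summable[OF power_half_series], of e] sums_unique[OF power_half_series] by simp
  finally show "om (\<Union>i. A i) \<le> (\<Sum>i. om (A i)) + ennreal e" .
qed

end

context riesz begin

lemma om_subadd2:
  assumes A: "A \<subseteq> \<Omega>" and B: "B \<subseteq> \<Omega>" shows "om (A \<union> B) \<le> om A + om B"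
proof (rule ennreal_le_epsilon)
  fix e :: real assume e: "0 < e"
  obtain U where U: "ropen U" "A \<subseteq> U" "nu U \<le> om A + ennreal (e/2)" using om_approx[OF A, of "e/2"] e by auto
  obtain W where W: "ropen W" "B \<subseteq> W" "nu W \<le> om B + ennreal (e/2)" using om_approx[OF B, of "e/2"] e by auto
  have "om (A \<union> B) \<le> nu (U \<union> W)" using U W by (intro om_le_nu ropen_Un) auto
  also have "\<dots> \<le> nu U + nu W" by (rule nu_Un[OF U(1) W(1)])
  also have "\<dots> \<le> (om A + ennreal (e/2)) + (om B + ennreal (e/2))" by (intro add_mono U(3) W(3))
  also have "\<dots> = om A + om B + (ennreal (e/2) + ennreal (e/2))" by (simp add: ac_simps)
  also have "ennreal (e/2) + ennreal (e/2) = ennreal e" using e by (simp flip: ennreal_plus)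
  finally show "om (A \<union> B) \<le> om A + om B + ennreal e" .
qed

lemma key:
  assumes U: "ropen U" and W: "ropen W"
  shows "nu (W \<inter> U) + om (W - U) \<le> nu W"
proof -
  have "nu (W \<inter> U) + om (W - U) = (SUP f\<in>F (W \<inter> U). ennreal (L f) + om (W - U))"
    unfolding nu_def by (rule ennreal_SUP_add_left[symmetric]) (use F_zero in blast)
  also have "\<dots> \<le> nu W"
  proof (rule SUP_least)
    fix f assume f: "f \<in> F (W \<inter> U)"
    have fV: "f \<in> V" and fp: "\<And>x. x \<in> \<Omega> \<Longrightarrow> 0 \<le> f x \<and> f x \<le> 1 \<and> (x \<notin> W \<inter> U \<longrightarrow> f x = 0)"
      using f unfolding F_def by auto
    show "ennreal (L f) + om (W - U) \<le> nu W"
    proof (rule ennreal_le_epsilon)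
      fix e :: real assume e: "0 < e"
      define \<epsilon> where "\<epsilon> = e / (L1 + 1)"
      have \<epsilon>: "0 < \<epsilon>" unfolding \<epsilon>_def using e L1_nonneg by auto
      have \<epsilon>L: "\<epsilon> * L1 \<le> e" unfolding \<epsilon>_def using e L1_nonneg by (simp add: field_simps)
      define f' where "f' = (\<lambda>x. max (f x - \<epsilon>) 0)"
      have f'V: "f' \<in> V" unfolding f'_def using V_max[OF V_diff[OF fV V_const] V_const] by simp
      have "closedin (top_of_set \<Omega>) (\<Omega> \<inter> f -` {\<epsilon>..})"
        by (rule continuous_closedin_preimage[OF CZ_cont[OF fV]]) auto
      then obtain C where C: "closed C" "\<Omega> \<inter> f -` {\<epsilon>..} = \<Omega> \<inter> C" by (auto simp: closedin_closed)
      define K where "K = \<Omega> \<inter> C"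
      obtain G where G: "open G" "W = \<Omega> \<inter> G" using W unfolding ropen_def by auto
      have WK: "ropen (W - K)" unfolding ropen_def K_def
        by (intro exI[of _ "G \<inter> - C"]) (use G C in auto)
      have KU: "K \<subseteq> W \<inter> U"
      proof
        fix x assume "x \<in> K"
        then have x: "x \<in> \<Omega>" "f x \<ge> \<epsilon>" using C(2) unfolding K_def by blast+
        then show "x \<in> W \<inter> U" using fp[OF x(1)] \<epsilon> by auto
      qed
      have "om (W - U) \<le> nu (W - K)" by (rule om_le_nu[OF WK]) (use KU in auto)
      have Lf: "L f \<le> L f' + e"
      proof -
        have "L f \<le> L (\<lambda>x. f' x + \<epsilon> * 1)"
          by (rule L_mono[OF fV V_add[OF f'V V_const]]) (auto simp: f'_def)
        also have "\<dots> = L f' + \<epsilon> * L1" using L_add[OF f'V V_const] L_scale[OF V_const[of 1], of \<epsilon>] by simp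
        finally show ?thesis using \<epsilon>L by simp
      qed
      have f'p: "0 \<le> f' x \<and> f' x \<le> 1" if x: "x \<in> \<Omega>" for x using fp[OF x] \<epsilon> by (auto simp: f'_def)
      have f'K: "\<And>x. x \<in> \<Omega> \<Longrightarrow> x \<notin> K \<Longrightarrow> f' x = 0"
        using C(2) \<epsilon> unfolding K_def f'_def by auto
      have f'W: "\<And>x. x \<in> \<Omega> \<Longrightarrow> x \<notin> W \<Longrightarrow> f' x = 0" using fp \<epsilon> by (auto simp: f'_def)
      have Lf'0: "0 \<le> L f'" by (rule L_pos[OF f'V]) (use f'p in auto)
      have sum: "ennreal (L f') + nu (W - K) \<le> nu W"
      proof -
        have "ennreal (L f') + nu (W - K) = (SUP g\<in>F (W - K). ennreal (L f') + ennreal (L g))"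
          unfolding nu_def by (rule ennreal_SUP_add_right) (use F_zero in blast)
        also have "\<dots> \<le> nu W"
        proof (rule SUP_least)
          fix g assume g: "g \<in> F (W - K)"
          have gV: "g \<in> V" and gp: "\<And>x. x \<in> \<Omega> \<Longrightarrow> 0 \<le> g x \<and> g x \<le> 1 \<and> (x \<notin> W - K \<longrightarrow> g x = 0)"
            using g unfolding F_def by auto
          have "(\<lambda>x. f' x + g x) \<in> F W"
            unfolding F_def
          proof (intro CollectI conjI ballI V_add f'V gV)
            fix x assume x: "x \<in> \<Omega>"
            show "0 \<le> f' x + g x" using f'p[OF x] gp[OF x] by simp
            show "f' x + g x \<le> 1" using f'p[OF x] gp[OF x] f'K[OF x] by (cases "x \<in> K") auto
            show "x \<notin> W \<longrightarrow> f' x + g x = 0" using f'W[OF x] gp[OF x] by auto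
          qed
          then have "ennreal (L (\<lambda>x. f' x + g x)) \<le> nu W" by (rule nu_ge)
          then show "ennreal (L f') + ennreal (L g) \<le> nu W"
            using L_add[OF f'V gV] Lf'0 F_nonneg[OF g] by (simp add: ennreal_plus)
        qed
        finally show ?thesis .
      qed
      have "ennreal (L f) \<le> ennreal (L f' + e)" using Lf by (rule ennreal_leI)
      also have "\<dots> = ennreal (L f') + ennreal e" using Lf'0 e by (intro ennreal_plus) auto
      finally have "ennreal (L f) \<le> ennreal (L f') + ennreal e" .
      then have "ennreal (L f) + om (W - U) \<le> ennreal (L f') + ennreal e + nu (W - K)"
        using \<open>om (W - U) \<le> nu (W - K)\<close> by (rule add_mono)
      also have "\<dots> = (ennreal (L f') + nu (W - K)) + ennreal e" by (simp add: ac_simps)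
      also have "\<dots> \<le> nu W + ennreal e" using sum by (rule add_right_mono)
      finally show "ennreal (L f) + om (W - U) \<le> nu W + ennreal e" .
    qed
  qed
  finally show ?thesis .
qed

definition "Lam = lambda_system \<Omega> (Pow \<Omega>) om"

lemma ropen_Lam: assumes U: "ropen U" shows "U \<in> Lam"
  unfolding Lam_def lambda_system_def
proof (intro CollectI conjI ballI)
  show "U \<in> Pow \<Omega>" using ropen_sub[OF U] by auto
  fix x assume "x \<in> Pow \<Omega>"
  then have x: "x \<subseteq> \<Omega>" by auto
  show "om (U \<inter> x) + om ((\<Omega> - U) \<inter> x) = om x"
  proof (rule antisym)
    show "om x \<le> om (U \<inter> x) + om ((\<Omega> - U) \<inter> x)"
    proof -
      have "x = (U \<inter> x) \<union> ((\<Omega> - U) \<inter> x)" using x by auto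
      then have "om x = om ((U \<inter> x) \<union> ((\<Omega> - U) \<inter> x))" by simp
      also have "\<dots> \<le> om (U \<inter> x) + om ((\<Omega> - U) \<inter> x)" using x by (intro om_subadd2) auto
      finally show ?thesis .
    qed
    show "om (U \<inter> x) + om ((\<Omega> - U) \<inter> x) \<le> om x"
      unfolding om_def[of x]
    proof (rule INF_greatest)
      fix W assume W: "W \<in> {W. ropen W \<and> x \<subseteq> W}"
      have "om (U \<inter> x) \<le> nu (W \<inter> U)" using W by (intro om_le_nu ropen_Int U) auto
      moreover have "om ((\<Omega> - U) \<inter> x) \<le> om (W - U)" using W by (intro om_mono) auto
      ultimately have "om (U \<inter> x) + om ((\<Omega> - U) \<inter> x) \<le> nu (W \<inter> U) + om (W - U)" by (rule add_mono)
      also have "\<dots> \<le> nu W" using W by (intro key U) auto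
      finally show "om (U \<inter> x) + om ((\<Omega> - U) \<inter> x) \<le> nu W" .
    qed
  qed
qed

lemma om_outer: "outer_measure_space (Pow \<Omega>) om"
  unfolding outer_measure_space_def
proof (intro conjI)
  show "positive (Pow \<Omega>) om" unfolding positive_def using om_empty by simp
  show "increasing (Pow \<Omega>) om" unfolding increasing_def using om_mono by auto
  show "countably_subadditive (Pow \<Omega>) om" unfolding countably_subadditive_def
    using om_csubadd by auto
qed

lemma Lam_ms: "measure_space \<Omega> Lam om"
  unfolding Lam_def by (rule sigma_algebra.caratheodory_lemma[OF sigma_algebra_Pow om_outer])

lemma Lam_sa: "sigma_algebra \<Omega> Lam"
  using Lam_ms unfolding measure_space_def by auto

lemma Lam_alg: "algebra \<Omega> Lam"
  using Lam_sa unfolding sigma_algebra_def by blast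

lemma borel_Lam: "B \<in> sets borel \<Longrightarrow> \<Omega> \<inter> B \<in> Lam"
  unfolding sets_borel
proof (induction rule: sigma_sets.induct)
  case (Basic a)
  then have "ropen (\<Omega> \<inter> a)" unfolding ropen_def by blast
  then show ?case by (rule ropen_Lam)
next
  case Empty then show ?case using ropen_Lam[OF ropen_empty] by simp
next
  case (Compl a)
  have "\<Omega> \<inter> (UNIV - a) = \<Omega> - (\<Omega> \<inter> a)" by auto
  have "\<Omega> - (\<Omega> \<inter> a) \<in> Lam" by (rule algebra.compl_sets[OF Lam_alg Compl(2)])
  then show ?case by (simp only: \<open>\<Omega> \<inter> (UNIV - a) = \<Omega> - (\<Omega> \<inter> a)\<close>)
next
  case (Union a)
  have "\<Omega> \<inter> (\<Union>i. a i) = (\<Union>i. \<Omega> \<inter> a i)" by auto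
  have "range (\<lambda>i. \<Omega> \<inter> a i) \<subseteq> Lam" using Union(2) by blast
  then have "(\<Union>i. \<Omega> \<inter> a i) \<in> Lam" by (rule sigma_algebra.countable_UN[OF Lam_sa])
  then show ?case by (simp only: \<open>\<Omega> \<inter> (\<Union>i. a i) = (\<Union>i. \<Omega> \<inter> a i)\<close>)
qed

definition "BO = sets (restrict_space borel \<Omega>)"

lemma BO_eq: "BO = (\<inter>) \<Omega> ` sets borel"
  unfolding BO_def by (rule sets_restrict_space)

lemma space_RB: "space (restrict_space borel \<Omega>) = \<Omega>" by (simp add: space_restrict_space)

lemma BO_sa: "sigma_algebra \<Omega> BO"
  using sets.sigma_algebra_axioms[of "restrict_space borel \<Omega>"] unfolding BO_def space_RB .

lemma BO_Pow: "BO \<subseteq> Pow \<Omega>"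
  using sets.space_closed[of "restrict_space borel \<Omega>"] unfolding BO_def space_RB .

lemma BO_Lam: "BO \<subseteq> Lam" unfolding BO_eq using borel_Lam by auto

lemma BO_ms: "measure_space \<Omega> BO om"
  by (rule measure_down[OF Lam_ms BO_sa BO_Lam])

definition "mu = measure_of \<Omega> BO om"

lemma sets_mu: "sets mu = BO"
  unfolding mu_def by (subst sets_measure_of[OF BO_Pow]) (rule sigma_algebra.sigma_sets_eq[OF BO_sa])

lemma space_mu: "space mu = \<Omega>"
  unfolding mu_def by (rule space_measure_of[OF BO_Pow])

lemma emeasure_mu: "A \<in> BO \<Longrightarrow> emeasure mu A = om A"
proof -
  assume A: "A \<in> BO"
  have "positive BO om" "countably_additive BO om" using BO_ms by (auto simp: measure_space_def)
  then show ?thesis unfolding mu_def by (rule emeasure_measure_of_sigma[OF BO_sa _ _ A])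
qed

end

lemma clamp_sum: "(\<Sum>i<n. min (max (y - real i) 0) 1) = min (max y 0) (real n)"
proof (induction n)
  case 0 then show ?case by simp
next
  case (Suc n)
  then show ?case by (simp add: min_def max_def)
qed

context riesz begin

lemma ropen_BO: "ropen U \<Longrightarrow> U \<in> BO"
  unfolding ropen_def BO_eq by auto

lemma closedin_BO: "closedin (top_of_set \<Omega>) K \<Longrightarrow> K \<in> BO"
  unfolding closedin_closed BO_eq by auto

lemma ropen_gt: "f \<in> V \<Longrightarrow> ropen {x\<in>\<Omega>. t < f x}"
proof -
  assume f: "f \<in> V"
  have "openin (top_of_set \<Omega>) (\<Omega> \<inter> f -` {t<..})"
    by (rule continuous_openin_preimage[OF CZ_cont[OF f], of UNIV]) (auto simp: openin_open intro!: exI[of _ "{t<..}"])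
  then show ?thesis unfolding ropen_def openin_open by (auto simp: vimage_def Int_def)
qed

lemma closedin_ge: "f \<in> V \<Longrightarrow> closedin (top_of_set \<Omega>) {x\<in>\<Omega>. t \<le> f x}"
proof -
  assume f: "f \<in> V"
  have "closedin (top_of_set \<Omega>) (\<Omega> \<inter> f -` {t..})"
    by (rule continuous_closedin_preimage[OF CZ_cont[OF f]]) auto
  moreover have "\<Omega> \<inter> f -` {t..} = {x\<in>\<Omega>. t \<le> f x}" by auto
  ultimately show ?thesis by simp
qed

lemma emeasure_mu_Omega: "emeasure mu \<Omega> = ennreal L1"
  using emeasure_mu[OF ropen_BO[OF ropen_Omega]] om_ropen[OF ropen_Omega] nu_Omega by simp

lemma fin_mu: "finite_measure mu"
  by (rule finite_measureI) (simp add: space_mu emeasure_mu_Omega)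

interpretation M: finite_measure mu by (rule fin_mu)

lemma measure_mu_Omega: "measure mu \<Omega> = L1"
  using emeasure_mu_Omega L1_nonneg by (simp add: measure_def)

lemma measure_mu_ropen: "ropen U \<Longrightarrow> ennreal (measure mu U) = nu U"
  using emeasure_mu[OF ropen_BO] om_ropen M.emeasure_eq_measure by metis

lemma meas_mu: "continuous_on \<Omega> f \<Longrightarrow> f \<in> borel_measurable mu"
  unfolding measurable_cong_sets[OF sets_mu[unfolded BO_def] refl, of borel]
  by (rule borel_measurable_continuous_on_restrict)

lemma int_bdd: "f \<in> V \<Longrightarrow> (\<And>x. x \<in> \<Omega> \<Longrightarrow> \<bar>f x\<bar> \<le> c) \<Longrightarrow> integrable mu f"
  by (rule M.integrable_const_bound[where B=c]) (auto simp: space_mu intro!: AE_I2 meas_mu CZ_cont)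

lemma lemmaB:
  assumes K: "closedin (top_of_set \<Omega>) K" and h: "h \<in> V" "\<And>x. x \<in> \<Omega> \<Longrightarrow> 0 \<le> h x \<and> h x \<le> 1"
    and h1: "\<And>x. x \<in> K \<Longrightarrow> h x = 1"
  shows "measure mu K \<le> L h"
proof -
  obtain C where C: "closed C" "K = \<Omega> \<inter> C" using K by (auto simp: closedin_closed)
  have ro: "ropen (\<Omega> - K)" unfolding ropen_def using C by (intro exI[of _ "- C"]) auto
  have hV: "(\<lambda>x. 1 - h x) \<in> V" using V_diff[OF V_const h(1)] .
  have "(\<lambda>x. 1 - h x) \<in> F (\<Omega> - K)" unfolding F_def using hV h(2) h1 by auto
  then have "ennreal (L (\<lambda>x. 1 - h x)) \<le> nu (\<Omega> - K)" by (rule nu_ge)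
  also have "\<dots> = ennreal (measure mu (\<Omega> - K))" using measure_mu_ropen[OF ro] by simp
  finally have "L (\<lambda>x. 1 - h x) \<le> measure mu (\<Omega> - K)" by (simp add: ennreal_le_iff)
  also have "measure mu (\<Omega> - K) = L1 - measure mu K"
    using M.finite_measure_compl[of K] closedin_BO[OF K] by (simp add: sets_mu space_mu measure_mu_Omega)
  finally show ?thesis using L_diff[OF V_const h(1)] by simp
qed

lemma int_le01:
  assumes fV: "f \<in> V" and f01: "\<And>x. x \<in> \<Omega> \<Longrightarrow> 0 \<le> f x \<and> f x \<le> 1"
  shows "integral\<^sup>L mu f \<le> L f"
proof -
  have fint: "integrable mu f" using int_bdd[OF fV, of 1] f01 by force
  have bound: "integral\<^sup>L mu f - L f \<le> L1 / real n" if n: "1 \<le> n" for n :: nat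
  proof -
    define g where "g i = (\<lambda>x. min (max (real n * f x - real i) 0) 1)" for i :: nat
    have gV: "g i \<in> V" for i
      unfolding g_def using V_min[OF V_max[OF V_diff[OF V_scale[OF fV] V_const] V_const] V_const] by simp
    have g01: "0 \<le> g i x \<and> g i x \<le> 1" for i x unfolding g_def by auto
    have gint: "integrable mu (g i)" for i using int_bdd[OF gV[of i], of 1] g01 by force
    have gsum: "(\<Sum>i<n. g i x) = real n * f x" if x: "x \<in> \<Omega>" for x
      unfolding g_def clamp_sum using f01[OF x] by (simp add: mult_left_le)
    define m where "m i = measure mu {x\<in>\<Omega>. real i / real n < f x}" for i :: nat
    have int_g: "integral\<^sup>L mu (g i) \<le> m i" for i
    proof -
      have S: "{x\<in>\<Omega>. real i / real n < f x} \<in> sets mu" using ropen_BO[OF ropen_gt[OF fV]] sets_mu by simp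
      have "integral\<^sup>L mu (g i) \<le> integral\<^sup>L mu (indicator {x\<in>\<Omega>. real i / real n < f x})"
      proof (rule integral_mono[OF gint])
        show "integrable mu (indicator {x\<in>\<Omega>. real i / real n < f x} :: _ \<Rightarrow> real)"
          using S by (intro integrable_real_indicator) (auto simp: M.emeasure_eq_measure)
        fix x assume x: "x \<in> space mu"
        show "g i x \<le> indicator {x\<in>\<Omega>. real i / real n < f x} x"
        proof (cases "real i / real n < f x")
          case True then show ?thesis using x g01 by (simp add: space_mu indicator_def)
        next
          case False
          have np: "0 < real n" using n by simp
          from False have "f x \<le> real i / real n" by simp
          then have "f x * real n \<le> real i" using np by (simp add: le_divide_eq)
          then have "real n * f x \<le> real i" by (simp add: mult.commute)
          then show ?thesis using x False by (simp add: g_def space_mu indicator_def)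
        qed
      qed
      also have "\<dots> = m i" using S by (simp add: m_def space_mu sets_mu Int_absorb2)
      finally show ?thesis .
    qed
    have Lg: "m (Suc i) \<le> L (g i)" for i
    proof -
      have "m (Suc i) \<le> measure mu {x\<in>\<Omega>. real (Suc i) / real n \<le> f x}"
        unfolding m_def using closedin_BO[OF closedin_ge[OF fV]] sets_mu
        by (intro M.finite_measure_mono) auto
      also have "\<dots> \<le> L (g i)"
      proof (rule lemmaB[OF closedin_ge[OF fV] gV])
        show "\<And>x. x \<in> \<Omega> \<Longrightarrow> 0 \<le> g i x \<and> g i x \<le> 1" using g01 by auto
        fix x assume "x \<in> {x \<in> \<Omega>. real (Suc i) / real n \<le> f x}"
        then have "real (Suc i) \<le> real n * f x" using n by (simp add: divide_le_eq mult.commute)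
        then show "g i x = 1" by (simp add: g_def)
      qed
      finally show ?thesis .
    qed
    have "real n * integral\<^sup>L mu f = integral\<^sup>L mu (\<lambda>x. \<Sum>i<n. g i x)"
      by (subst Bochner_Integration.integral_cong[OF refl, of _ _ "\<lambda>x. real n * f x"]) (auto simp: gsum space_mu)
    also have "\<dots> = (\<Sum>i<n. integral\<^sup>L mu (g i))" by (subst Bochner_Integration.integral_sum) (auto intro: gint)
    finally have I: "real n * integral\<^sup>L mu f = (\<Sum>i<n. integral\<^sup>L mu (g i))" .
    have "real n * L f = L (\<lambda>x. real n * f x)" by (rule L_scale[OF fV, symmetric])
    also have "\<dots> = L (\<lambda>x. \<Sum>i<n. g i x)"
      by (rule L_cong[OF V_scale[OF fV] V_sum]) (auto simp: gsum gV)
    also have "\<dots> = (\<Sum>i<n. L (g i))" by (rule L_sum) (auto simp: gV)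
    finally have J: "real n * L f = (\<Sum>i<n. L (g i))" .
    have "real n * (integral\<^sup>L mu f - L f) = (\<Sum>i<n. integral\<^sup>L mu (g i) - L (g i))"
      using I J by (simp add: right_diff_distrib sum_subtractf)
    also have "\<dots> \<le> (\<Sum>i<n. m i - m (Suc i))" by (intro sum_mono diff_mono int_g Lg)
    also have "\<dots> = m 0 - m n" by (rule sum_lessThan_telescope')
    also have "\<dots> \<le> L1"
    proof -
      have "m 0 \<le> measure mu \<Omega>" unfolding m_def using sets_mu ropen_BO[OF ropen_Omega]
        by (intro M.finite_measure_mono) auto
      moreover have "0 \<le> m n" unfolding m_def by simp
      ultimately show ?thesis using measure_mu_Omega by simp
    qed
    finally show ?thesis using n by (simp add: field_simps)
  qed
  show ?thesis
  proof (rule ccontr)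
    assume "\<not> ?thesis"
    then have d: "0 < integral\<^sup>L mu f - L f" by simp
    obtain n :: nat where n: "L1 / (integral\<^sup>L mu f - L f) < real n" using reals_Archimedean2 by blast
    have n1: "1 \<le> n" using n L1_nonneg d by (cases n) (auto simp: divide_less_0_iff)
    have "L1 < real n * (integral\<^sup>L mu f - L f)" using n d by (simp add: divide_less_eq)
    moreover have "real n * (integral\<^sup>L mu f - L f) \<le> L1" using bound[OF n1] n1 by (simp add: field_simps)
    ultimately show False by simp
  qed
qed

lemma int_le_bdd:
  assumes fV: "f \<in> V" and fb: "\<And>x. x \<in> \<Omega> \<Longrightarrow> \<bar>f x\<bar> \<le> c"
  shows "integral\<^sup>L mu f \<le> L f"
proof -
  define c' where "c' = max c 1"
  have c': "0 < c'" "\<And>x. x \<in> \<Omega> \<Longrightarrow> \<bar>f x\<bar> \<le> c'" using fb by (auto simp: c'_def le_max_iff_disj)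
  define a where "a = 1 / (2 * c')"
  have a: "0 < a" using c' by (simp add: a_def)
  define h where "h = (\<lambda>x. a * f x + 1/2)"
  have hV: "h \<in> V" unfolding h_def by (rule V_add[OF V_scale[OF fV] V_const])
  have h01: "0 \<le> h x \<and> h x \<le> 1" if x: "x \<in> \<Omega>" for x
  proof -
    have "\<bar>a * f x\<bar> \<le> a * c'" using c'(2)[OF x] a by (simp add: abs_mult)
    also have "a * c' = 1/2" using c' by (simp add: a_def)
    finally show ?thesis unfolding h_def by auto
  qed
  have fint: "integrable mu f" using int_bdd[OF fV] c'(2) by blast
  have "integral\<^sup>L mu h = a * integral\<^sup>L mu f + 1/2 * L1"
    unfolding h_def using fint by (simp add: measure_mu_Omega space_mu)
  moreover have "L h = a * L f + 1/2 * L1"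
    unfolding h_def using L_add[OF V_scale[OF fV] V_const] L_scale[OF fV] L_scale[OF V_const[of 1], of "1/2"] by simp
  moreover have "integral\<^sup>L mu h \<le> L h" by (rule int_le01[OF hV h01])
  ultimately show ?thesis using a by simp
qed

lemma int_eq_bdd:
  assumes fV: "f \<in> V" and fb: "\<And>x. x \<in> \<Omega> \<Longrightarrow> \<bar>f x\<bar> \<le> c"
  shows "integral\<^sup>L mu f = L f"
proof (rule antisym)
  show "integral\<^sup>L mu f \<le> L f" by (rule int_le_bdd[OF fV fb])
  have "integral\<^sup>L mu (\<lambda>x. - f x) \<le> L (\<lambda>x. - f x)" by (rule int_le_bdd[OF V_minus[OF fV]]) (use fb in auto)
  then show "L f \<le> integral\<^sup>L mu f" using L_minus[OF fV] by simp
qed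

end

context riesz begin

interpretation M: finite_measure mu by (rule fin_mu)

lemma meas_enn: "f \<in> V \<Longrightarrow> (\<lambda>x. ennreal (f x)) \<in> borel_measurable mu"
  by (rule measurable_compose[OF meas_mu[OF CZ_cont] measurable_ennreal])

lemma Z_nn: "(\<integral>\<^sup>+x. ennreal (Z x) \<partial>mu) < \<infinity>"
proof -
  define Zn where "Zn n = (\<lambda>x. min (Z x) (real n))" for n :: nat
  have ZnV: "Zn n \<in> V" for n unfolding Zn_def by (rule V_min[OF V_Z V_const])
  have Znb: "\<bar>Zn n x\<bar> \<le> real n" if "x \<in> \<Omega>" for n x using Z_ge1[OF that] by (auto simp: Zn_def)
  have int: "integrable mu (Zn n)" for n using int_bdd[OF ZnV Znb] .
  have eq: "integral\<^sup>L mu (Zn n) = L (Zn n)" for n by (rule int_eq_bdd[OF ZnV Znb])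
  have le: "L (Zn n) \<le> L Z" for n by (rule L_mono[OF ZnV V_Z]) (auto simp: Zn_def)
  have "(\<integral>\<^sup>+x. ennreal (Z x) \<partial>mu) = (\<integral>\<^sup>+x. (SUP n. ennreal (Zn n x)) \<partial>mu)"
  proof (rule nn_integral_cong)
    fix x show "ennreal (Z x) = (SUP n. ennreal (Zn n x))"
    proof (rule antisym)
      obtain N :: nat where "Z x \<le> real N" using real_arch_simple by blast
      then have "ennreal (Z x) = ennreal (Zn N x)" by (simp add: Zn_def)
      also have "\<dots> \<le> (SUP n. ennreal (Zn n x))" by (rule SUP_upper) simp
      finally show "ennreal (Z x) \<le> (SUP n. ennreal (Zn n x))" .
      show "(SUP n. ennreal (Zn n x)) \<le> ennreal (Z x)" by (rule SUP_least) (auto simp: Zn_def intro!: ennreal_leI)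
    qed
  qed
  also have "\<dots> = (SUP n. \<integral>\<^sup>+x. ennreal (Zn n x) \<partial>mu)"
  proof (rule nn_integral_monotone_convergence_SUP)
    show "incseq (\<lambda>n x. ennreal (Zn n x))"
      unfolding incseq_def le_fun_def Zn_def by (auto intro!: ennreal_leI)
    show "\<And>n. (\<lambda>x. ennreal (Zn n x)) \<in> borel_measurable mu" by (rule meas_enn[OF ZnV])
  qed
  also have "\<dots> \<le> ennreal (L Z)"
  proof (rule SUP_least)
    fix n
    have "(\<integral>\<^sup>+x. ennreal (Zn n x) \<partial>mu) = ennreal (integral\<^sup>L mu (Zn n))"
    proof (rule nn_integral_eq_integral[OF int], rule AE_I2)
      fix x assume "x \<in> space mu"
      then have "1 \<le> Z x" using Z_ge1 space_mu by auto
      then show "0 \<le> Zn n x" by (simp add: Zn_def)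
    qed
    also have "\<dots> \<le> ennreal (L Z)" using eq le by (auto intro: ennreal_leI)
    finally show "(\<integral>\<^sup>+x. ennreal (Zn n x) \<partial>mu) \<le> ennreal (L Z)" .
  qed
  finally show ?thesis by (simp add: le_less_trans)
qed

lemma Z_int: "integrable mu Z"
proof (rule integrableI_bounded)
  show "Z \<in> borel_measurable mu" by (rule meas_mu[OF Z_cont])
  have "(\<integral>\<^sup>+x. ennreal (norm (Z x)) \<partial>mu) = (\<integral>\<^sup>+x. ennreal (Z x) \<partial>mu)"
    by (rule nn_integral_cong) (auto simp: space_mu dest!: Z_ge1)
  then show "(\<integral>\<^sup>+x. ennreal (norm (Z x)) \<partial>mu) < \<infinity>" using Z_nn by simp
qed

lemma V_int: assumes fV: "f \<in> V" shows "integrable mu f"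
proof -
  obtain c where c: "0 \<le> c" "\<And>x. x \<in> \<Omega> \<Longrightarrow> \<bar>f x\<bar> \<le> c * Z x" using V_E[OF fV] by blast
  have "integrable mu (\<lambda>x. c * Z x)" using Z_int by simp
  moreover have "AE x in mu. norm (f x) \<le> norm (c * Z x)"
  proof (rule AE_I2)
    fix x assume "x \<in> space mu"
    then have x: "x \<in> \<Omega>" using space_mu by simp
    have "norm (c * Z x) = c * Z x" using c(1) Z_ge1[OF x] by (simp add: abs_mult)
    then show "norm (f x) \<le> norm (c * Z x)" using c(2)[OF x] by simp
  qed
  ultimately show ?thesis by (rule Bochner_Integration.integrable_bound[OF _ meas_mu[OF CZ_cont[OF fV]]])
qed

lemma int_eq: assumes fV: "f \<in> V" shows "integral\<^sup>L mu f = L f"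
proof -
  obtain c0 where c0: "0 \<le> c0" "\<And>x. x \<in> \<Omega> \<Longrightarrow> \<bar>f x\<bar> \<le> c0 * Z x" using V_E[OF fV] by blast
  define c where "c = c0 + 1"
  have c: "0 < c" "\<And>x. x \<in> \<Omega> \<Longrightarrow> \<bar>f x\<bar> \<le> c * Z x"
  proof -
    show "0 < c" using c0 by (simp add: c_def)
    fix x assume x: "x \<in> \<Omega>"
    have "c0 * Z x \<le> c * Z x" using Z_ge1[OF x] by (simp add: c_def)
    then show "\<bar>f x\<bar> \<le> c * Z x" using c0(2)[OF x] by linarith
  qed
  define s where "s n = (\<lambda>x. max (min (f x) (real n)) (- real n))" for n :: nat
  have sV: "s n \<in> V" for n unfolding s_def by (rule V_max[OF V_min[OF fV V_const] V_const])
  have sb: "\<bar>s n x\<bar> \<le> real n" for n x by (auto simp: s_def)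
  have seq: "integral\<^sup>L mu (s n) = L (s n)" for n by (rule int_eq_bdd[OF sV sb])
  have lim1: "(\<lambda>n. integral\<^sup>L mu (s n)) \<longlonglongrightarrow> integral\<^sup>L mu f"
  proof (rule integral_dominated_convergence[where w="\<lambda>x. \<bar>f x\<bar>"])
    show "f \<in> borel_measurable mu" by (rule meas_mu[OF CZ_cont[OF fV]])
    show "\<And>n. s n \<in> borel_measurable mu" by (rule meas_mu[OF CZ_cont[OF sV]])
    show "integrable mu (\<lambda>x. \<bar>f x\<bar>)" using V_int[OF fV] by simp
    show "AE x in mu. (\<lambda>n. s n x) \<longlonglongrightarrow> f x"
    proof (rule AE_I2)
      fix x
      obtain N :: nat where N: "\<bar>f x\<bar> \<le> real N" using real_arch_simple by blast
      have "eventually (\<lambda>n. s n x = f x) sequentially"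
        unfolding eventually_sequentially
      proof (intro exI allI impI)
        fix n assume "N \<le> n"
        then have "\<bar>f x\<bar> \<le> real n" using N by (meson of_nat_le_iff order_trans)
        then show "s n x = f x" by (auto simp: s_def)
      qed
      then show "(\<lambda>n. s n x) \<longlonglongrightarrow> f x" by (rule tendsto_eventually)
    qed
    show "\<And>n. AE x in mu. norm (s n x) \<le> \<bar>f x\<bar>" by (auto simp: s_def intro!: AE_I2)
  qed
  have tl_lim: "(\<lambda>n. c * L (tlf ((1/c) * real n))) \<longlonglongrightarrow> 0"
  proof -
    have "LIM n sequentially. (1/c) * real n :> at_top"
      by (rule filterlim_tendsto_pos_mult_at_top[OF tendsto_const _ filterlim_real_sequentially]) (use c in simp)
    then have "(\<lambda>n. L (tlf ((1/c) * real n))) \<longlonglongrightarrow> 0" by (rule filterlim_compose[OF tail])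
    then show ?thesis using tendsto_mult_right_zero by blast
  qed
  have diff: "\<bar>L (s n) - L f\<bar> \<le> c * L (tlf ((1/c) * real n))" for n
  proof -
    define t where "t = (1/c) * real n"
    have pw: "\<bar>s n x - f x\<bar> \<le> c * tlf t x" if x: "x \<in> \<Omega>" for x
    proof -
      have "c * tlf t x \<ge> c * (Z x - t)" using c(1) by (intro mult_left_mono) auto
      moreover have "c * (Z x - t) = c * Z x - real n" using c(1) by (simp add: t_def field_simps)
      moreover have "0 \<le> c * tlf t x" using c(1) by simp
      ultimately show ?thesis using c(2)[OF x] by (auto simp: s_def abs_le_iff max_def min_def)
    qed
    have tV: "(\<lambda>x. c * tlf t x) \<in> V" by (rule V_scale[OF V_tl])
    have "L (s n) - L f = L (\<lambda>x. s n x - f x)" by (rule L_diff[OF sV fV, symmetric])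
    also have "\<dots> \<le> L (\<lambda>x. c * tlf t x)" by (rule L_mono[OF V_diff[OF sV fV] tV]) (use pw in \<open>force simp: abs_le_iff\<close>)
    finally have 1: "L (s n) - L f \<le> c * L (tlf t)" using L_scale[OF V_tl] by simp
    have "L f - L (s n) = L (\<lambda>x. f x - s n x)" by (rule L_diff[OF fV sV, symmetric])
    also have "\<dots> \<le> L (\<lambda>x. c * tlf t x)" by (rule L_mono[OF V_diff[OF fV sV] tV]) (use pw in force)
    finally have 2: "L f - L (s n) \<le> c * L (tlf t)" using L_scale[OF V_tl] by simp
    show ?thesis using 1 2 by (simp add: t_def abs_le_iff)
  qed
  have lim2: "(\<lambda>n. L (s n)) \<longlonglongrightarrow> L f"
  proof (rule LIM_zero_cancel, rule Lim_null_comparison[OF _ tl_lim])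
    show "\<forall>\<^sub>F n in sequentially. norm (L (s n) - L f) \<le> c * L (tlf ((1/c) * real n))"
      using diff by simp
  qed
  have "(\<lambda>n. integral\<^sup>L mu (s n)) \<longlonglongrightarrow> L f" using lim2 seq by simp
  then show ?thesis using lim1 LIMSEQ_unique by blast
qed

theorem riesz_rep: "mu \<in> caZ \<Omega> Z \<and> (\<forall>f\<in>V. pairing f mu = L f)"
  unfolding caZ_def pairing_def using sets_mu Z_nn int_eq by (simp add: BO_def)

end

locale fvs =
  fixes V :: "('a \<Rightarrow> real) set"
  assumes Vadd: "\<And>f h. f \<in> V \<Longrightarrow> h \<in> V \<Longrightarrow> (\<lambda>x. f x + h x) \<in> V"
    and Vscale: "\<And>f c. f \<in> V \<Longrightarrow> (\<lambda>x. c * f x) \<in> V"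
    and Vzero: "(\<lambda>x. 0) \<in> V"
begin

lemma Vneg: "f \<in> V \<Longrightarrow> (\<lambda>x. - f x) \<in> V" using Vscale[of f "-1"] by simp

definition sl :: "(('a \<Rightarrow> real) \<Rightarrow> real) \<Rightarrow> bool" where
  "sl q \<longleftrightarrow> (\<forall>f\<in>V. \<forall>a>0. q (\<lambda>x. a * f x) \<le> a * q f) \<and> (\<forall>f\<in>V. \<forall>h\<in>V. q (\<lambda>x. f x + h x) \<le> q f + q h)"

lemma slD1: "sl q \<Longrightarrow> f \<in> V \<Longrightarrow> 0 < a \<Longrightarrow> q (\<lambda>x. a * f x) \<le> a * q f"
  unfolding sl_def by blast
lemma slD2: "sl q \<Longrightarrow> f \<in> V \<Longrightarrow> h \<in> V \<Longrightarrow> q (\<lambda>x. f x + h x) \<le> q f + q h"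
  unfolding sl_def by blast

lemma sl_zero: assumes "sl q" shows "q (\<lambda>x. 0) = 0"
proof -
  have "q (\<lambda>x. 0) \<le> q (\<lambda>x. 0) + q (\<lambda>x. 0)" using slD2[OF assms Vzero Vzero] by simp
  moreover have "q (\<lambda>x. 0) \<le> (1/2) * q (\<lambda>x. 0)" using slD1[OF assms Vzero, of "1/2"] by simp
  ultimately show ?thesis by simp
qed

lemma sl_hom: assumes q: "sl q" and f: "f \<in> V" and t: "0 \<le> t" shows "q (\<lambda>x. t * f x) = t * q f"
proof (cases "t = 0")
  case True then show ?thesis using sl_zero[OF q] by simp
next
  case False
  then have t: "0 < t" using t by simp
  have "q f = q (\<lambda>x. (1/t) * (t * f x))" using t by simp
  also have "\<dots> \<le> (1/t) * q (\<lambda>x. t * f x)" by (rule slD1[OF q Vscale[OF f]]) (use t in simp)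
  finally have "t * q f \<le> q (\<lambda>x. t * f x)" using t by (simp add: field_simps)
  then show ?thesis using slD1[OF q f t] by simp
qed

lemma sl_lb: assumes q: "sl q" and f: "f \<in> V" shows "- q (\<lambda>x. - f x) \<le> q f"
proof -
  have "q (\<lambda>x. f x + - f x) \<le> q f + q (\<lambda>x. - f x)" by (rule slD2[OF q f Vneg[OF f]])
  then show ?thesis using sl_zero[OF q] by simp
qed

definition cvx :: "(('a \<Rightarrow> real) \<Rightarrow> real) \<Rightarrow> bool" where
  "cvx g \<longleftrightarrow> (\<forall>f\<in>V. \<forall>h\<in>V. \<forall>l. 0 \<le> l \<and> l \<le> 1 \<longrightarrow> g (\<lambda>x. l * f x + (1 - l) * h x) \<le> l * g f + (1 - l) * g h)"

lemma cvxD: "cvx g \<Longrightarrow> f \<in> V \<Longrightarrow> h \<in> V \<Longrightarrow> 0 \<le> l \<Longrightarrow> l \<le> 1 \<Longrightarrow>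
    g (\<lambda>x. l * f x + (1 - l) * h x) \<le> l * g f + (1 - l) * g h"
  unfolding cvx_def by blast

definition Sset :: "(('a \<Rightarrow> real) \<Rightarrow> real) \<Rightarrow> (('a \<Rightarrow> real) \<Rightarrow> real) set" where
  "Sset g = {q. sl q \<and> (\<forall>f\<in>V. q f \<le> g f) \<and> (\<forall>f. f \<notin> V \<longrightarrow> q f = 0)}"

definition Pr :: "(('a \<Rightarrow> real) \<Rightarrow> real) \<Rightarrow> (('a \<Rightarrow> real) \<Rightarrow> real) \<Rightarrow> bool" where
  "Pr q1 q2 \<longleftrightarrow> (\<forall>f\<in>V. q2 f \<le> q1 f)"

lemma Sset_lb: assumes "q \<in> Sset g" "f \<in> V" shows "- g (\<lambda>x. - f x) \<le> q f"
proof -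
  have "q (\<lambda>x. - f x) \<le> g (\<lambda>x. - f x)" using assms Vneg by (auto simp: Sset_def)
  then show ?thesis using sl_lb[of q f] assms by (auto simp: Sset_def)
qed

context
  fixes g assumes g: "cvx g" and g0: "g (\<lambda>x. 0) = 0"
begin

lemma dq_lb: assumes f: "f \<in> V" and t: "0 < t" shows "- g (\<lambda>x. - f x) \<le> g (\<lambda>x. t * f x) / t"
proof -
  define l where "l = 1 / (1 + t)"
  have l: "0 \<le> l" "l \<le> 1" using t by (auto simp: l_def)
  have eq: "(\<lambda>x. l * (t * f x) + (1 - l) * (- f x)) = (\<lambda>x. 0)"
    using t by (auto simp: l_def fun_eq_iff field_simps)
  have c: "g (\<lambda>x. l * (t * f x) + (1 - l) * (- f x)) \<le> l * g (\<lambda>x. t * f x) + (1 - l) * g (\<lambda>x. - f x)"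
    by (rule cvxD[OF g Vscale[OF f] Vneg[OF f] l])
  then have "0 \<le> l * g (\<lambda>x. t * f x) + (1 - l) * g (\<lambda>x. - f x)"
    unfolding eq g0 .
  also have "\<dots> = g (\<lambda>x. t * f x) / (1 + t) + (t * g (\<lambda>x. - f x)) / (1 + t)"
  proof -
    have l1: "1 - l = t / (1 + t)" using t by (simp add: l_def field_simps)
    show ?thesis unfolding l1 by (simp add: l_def)
  qed
  also have "\<dots> = (g (\<lambda>x. t * f x) + t * g (\<lambda>x. - f x)) / (1 + t)"
    by (simp add: add_divide_distrib)
  finally have "0 \<le> g (\<lambda>x. t * f x) + t * g (\<lambda>x. - f x)" using t by (simp add: zero_le_divide_iff)
  then show ?thesis using t by (simp add: le_divide_eq algebra_simps)
qed

definition p :: "('a \<Rightarrow> real) \<Rightarrow> real" where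
  "p f = (if f \<in> V then (INF t\<in>{0<..}. g (\<lambda>x. t * f x) / t) else 0)"

lemma p_bdd: "f \<in> V \<Longrightarrow> bdd_below ((\<lambda>t. g (\<lambda>x. t * f x) / t) ` {0<..})"
  by (rule bdd_belowI2[of _ "- g (\<lambda>x. - f x)"]) (auto intro: dq_lb)

lemma p_le: "f \<in> V \<Longrightarrow> 0 < t \<Longrightarrow> p f \<le> g (\<lambda>x. t * f x) / t"
  unfolding p_def by (auto intro!: cINF_lower p_bdd)

lemma p_ge: "f \<in> V \<Longrightarrow> (\<And>t. 0 < t \<Longrightarrow> m \<le> g (\<lambda>x. t * f x) / t) \<Longrightarrow> m \<le> p f"
  unfolding p_def by (auto intro!: cINF_greatest)

lemma p_S: "p \<in> Sset g"
  unfolding Sset_def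
proof (intro CollectI conjI ballI allI impI)
  show "f \<notin> V \<Longrightarrow> p f = 0" for f by (simp add: p_def)
  show "p f \<le> g f" if f: "f \<in> V" for f using p_le[OF f, of 1] by simp
  show "sl p" unfolding sl_def
  proof (intro conjI ballI allI impI)
    fix f a assume f: "f \<in> V" and a: "(0::real) < a"
    have "p (\<lambda>x. a * f x) / a \<le> p f"
    proof (rule p_ge[OF f])
      fix t :: real assume t: "0 < t"
      have "p (\<lambda>x. a * f x) \<le> g (\<lambda>x. (t / a) * (a * f x)) / (t / a)"
        using t a by (intro p_le Vscale f) auto
      also have "(\<lambda>x. (t / a) * (a * f x)) = (\<lambda>x. t * f x)" using a by (auto simp: fun_eq_iff)
      finally show "p (\<lambda>x. a * f x) / a \<le> g (\<lambda>x. t * f x) / t" using a t by (simp add: field_simps)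
    qed
    then show "p (\<lambda>x. a * f x) \<le> a * p f" using a by (simp add: divide_le_eq mult.commute)
  next
    fix f h assume f: "f \<in> V" and h: "h \<in> V"
    have fh: "(\<lambda>x. f x + h x) \<in> V" by (rule Vadd[OF f h])
    have key: "p (\<lambda>x. f x + h x) \<le> g (\<lambda>x. s * f x) / s + g (\<lambda>x. u * h x) / u"
      if s: "0 < s" and u: "0 < u" for s u
    proof -
      define t where "t = s * u / (s + u)"
      define l where "l = u / (s + u)"
      have t: "0 < t" using s u by (simp add: t_def)
      have l: "0 \<le> l" "l \<le> 1" using s u by (auto simp: l_def)
      have e1: "l * s = t" and e2: "(1 - l) * u = t" using s u by (simp_all add: l_def t_def field_simps)
      have eq: "(\<lambda>x. l * (s * f x) + (1 - l) * (u * h x)) = (\<lambda>x. t * (f x + h x))"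
      proof
        fix x
        have "l * (s * f x) + (1 - l) * (u * h x) = (l * s) * f x + ((1 - l) * u) * h x" by (simp only: mult.assoc)
        also have "\<dots> = t * (f x + h x)" by (simp add: e1 e2 distrib_left)
        finally show "l * (s * f x) + (1 - l) * (u * h x) = t * (f x + h x)" .
      qed
      have "g (\<lambda>x. t * (f x + h x)) \<le> l * g (\<lambda>x. s * f x) + (1 - l) * g (\<lambda>x. u * h x)"
        using cvxD[OF g Vscale[OF f, of s] Vscale[OF h, of u] l] unfolding eq .
      then have "g (\<lambda>x. t * (f x + h x)) / t \<le> (l * g (\<lambda>x. s * f x) + (1 - l) * g (\<lambda>x. u * h x)) / t"
        using t by (simp add: divide_right_mono)
      also have "\<dots> = g (\<lambda>x. s * f x) / s + g (\<lambda>x. u * h x) / u"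
      proof -
        have a1: "l / t = 1 / s" using e1 s t by (auto simp: field_simps)
        have a2: "(1 - l) / t = 1 / u" using e2 u t by (auto simp: field_simps)
        have "(l * g (\<lambda>x. s * f x) + (1 - l) * g (\<lambda>x. u * h x)) / t
            = (l / t) * g (\<lambda>x. s * f x) + ((1 - l) / t) * g (\<lambda>x. u * h x)"
          by (simp add: add_divide_distrib)
        also have "\<dots> = g (\<lambda>x. s * f x) / s + g (\<lambda>x. u * h x) / u" unfolding a1 a2 by simp
        finally show ?thesis .
      qed
      finally have "g (\<lambda>x. t * (f x + h x)) / t \<le> g (\<lambda>x. s * f x) / s + g (\<lambda>x. u * h x) / u" .
      moreover have "p (\<lambda>x. f x + h x) \<le> g (\<lambda>x. t * (f x + h x)) / t" by (rule p_le[OF fh t])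
      ultimately show ?thesis by simp
    qed
    have "p (\<lambda>x. f x + h x) - p f \<le> g (\<lambda>x. u * h x) / u" if u: "0 < u" for u
    proof -
      have "p (\<lambda>x. f x + h x) - g (\<lambda>x. u * h x) / u \<le> p f"
        by (rule p_ge[OF f]) (use key u in force)
      then show ?thesis by simp
    qed
    then have "p (\<lambda>x. f x + h x) - p f \<le> p h" by (intro p_ge[OF h])
    then show "p (\<lambda>x. f x + h x) \<le> p f + p h" by simp
  qed
qed

lemma chain_bound:
  assumes C: "C \<noteq> {}" "C \<subseteq> Sset g" and ch: "\<And>a b. a \<in> C \<Longrightarrow> b \<in> C \<Longrightarrow> Pr a b \<or> Pr b a"
  shows "\<exists>u\<in>Sset g. \<forall>a\<in>C. Pr a u"
proof -
  define m where "m f = (if f \<in> V then (INF q\<in>C. q f) else 0)" for f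
  have bdd: "bdd_below ((\<lambda>q. q f) ` C)" if f: "f \<in> V" for f
    by (rule bdd_belowI2[of _ "- g (\<lambda>x. - f x)"]) (use Sset_lb C(2) f in blast)
  have m_le: "m f \<le> q f" if "f \<in> V" "q \<in> C" for f q
    unfolding m_def using that by (auto intro!: cINF_lower bdd)
  have m_ge: "M \<le> m f" if "f \<in> V" "\<And>q. q \<in> C \<Longrightarrow> M \<le> q f" for f M
    unfolding m_def using that C(1) by (auto intro!: cINF_greatest)
  have qS: "sl q" "\<And>f. f \<in> V \<Longrightarrow> q f \<le> g f" if "q \<in> C" for q
    using that C(2) by (auto simp: Sset_def)
  obtain q0 where q0: "q0 \<in> C" using C(1) by blast
  have "m \<in> Sset g"
    unfolding Sset_def
  proof (intro CollectI conjI ballI allI impI)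
    show "f \<notin> V \<Longrightarrow> m f = 0" for f by (simp add: m_def)
    show "m f \<le> g f" if f: "f \<in> V" for f using m_le[OF f q0] qS(2)[OF q0 f] by simp
    show "sl m" unfolding sl_def
    proof (intro conjI ballI allI impI)
      fix f a assume f: "f \<in> V" and a: "(0::real) < a"
      have "m (\<lambda>x. a * f x) / a \<le> m f"
      proof (rule m_ge[OF f])
        fix q assume q: "q \<in> C"
        have "m (\<lambda>x. a * f x) \<le> q (\<lambda>x. a * f x)" by (rule m_le[OF Vscale[OF f] q])
        also have "\<dots> \<le> a * q f" by (rule slD1[OF qS(1)[OF q] f a])
        finally show "m (\<lambda>x. a * f x) / a \<le> q f" using a by (simp add: divide_le_eq mult.commute)
      qed
      then show "m (\<lambda>x. a * f x) \<le> a * m f" using a by (simp add: divide_le_eq mult.commute)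
    next
      fix f h assume f: "f \<in> V" and h: "h \<in> V"
      have fh: "(\<lambda>x. f x + h x) \<in> V" by (rule Vadd[OF f h])
      have key: "m (\<lambda>x. f x + h x) \<le> q1 f + q2 h" if q1: "q1 \<in> C" and q2: "q2 \<in> C" for q1 q2
      proof (cases "Pr q1 q2")
        case True
        have "m (\<lambda>x. f x + h x) \<le> q2 (\<lambda>x. f x + h x)" by (rule m_le[OF fh q2])
        also have "\<dots> \<le> q2 f + q2 h" by (rule slD2[OF qS(1)[OF q2] f h])
        also have "\<dots> \<le> q1 f + q2 h" using True f by (simp add: Pr_def)
        finally show ?thesis .
      next
        case False
        then have "Pr q2 q1" using ch[OF q1 q2] by blast
        have "m (\<lambda>x. f x + h x) \<le> q1 (\<lambda>x. f x + h x)" by (rule m_le[OF fh q1])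
        also have "\<dots> \<le> q1 f + q1 h" by (rule slD2[OF qS(1)[OF q1] f h])
        also have "\<dots> \<le> q1 f + q2 h" using \<open>Pr q2 q1\<close> h by (simp add: Pr_def)
        finally show ?thesis .
      qed
      have "m (\<lambda>x. f x + h x) - m f \<le> q2 h" if q2: "q2 \<in> C" for q2
      proof -
        have "m (\<lambda>x. f x + h x) - q2 h \<le> m f" by (rule m_ge[OF f]) (use key q2 in force)
        then show ?thesis by simp
      qed
      then have "m (\<lambda>x. f x + h x) - m f \<le> m h" by (intro m_ge[OF h])
      then show "m (\<lambda>x. f x + h x) \<le> m f + m h" by simp
    qed
  qed
  moreover have "\<forall>a\<in>C. Pr a m" unfolding Pr_def using m_le by blast
  ultimately show ?thesis by blast
qed

lemma exists_min: "\<exists>q\<in>Sset g. \<forall>a\<in>Sset g. Pr q a \<longrightarrow> a = q"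
proof (rule predicate_Zorn)
  show "partial_order_on (Sset g) (relation_of Pr (Sset g))"
  proof (rule partial_order_on_relation_ofI)
    show "\<And>a. a \<in> Sset g \<Longrightarrow> Pr a a" by (simp add: Pr_def)
    show "\<And>a b c. a \<in> Sset g \<Longrightarrow> b \<in> Sset g \<Longrightarrow> c \<in> Sset g \<Longrightarrow> Pr a b \<Longrightarrow> Pr b c \<Longrightarrow> Pr a c"
      unfolding Pr_def by (meson order_trans)
    fix a b assume ab: "a \<in> Sset g" "b \<in> Sset g" "Pr a b" "Pr b a"
    show "a = b"
    proof
      fix f show "a f = b f"
      proof (cases "f \<in> V")
        case True then show ?thesis using ab(3,4) by (auto simp: Pr_def intro: antisym)
      next
        case False then show ?thesis using ab(1,2) by (simp add: Sset_def)
      qed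
    qed
  qed
  fix C assume C: "C \<in> Chains (relation_of Pr (Sset g))"
  show "\<exists>u\<in>Sset g. \<forall>a\<in>C. Pr a u"
  proof (cases "C = {}")
    case True then show ?thesis using p_S by blast
  next
    case False
    have sub: "C \<subseteq> Sset g"
    proof
      fix a assume a: "a \<in> C"
      then have "(a, a) \<in> relation_of Pr (Sset g)" using C unfolding Chains_def by blast
      then show "a \<in> Sset g" by (simp add: relation_of_def)
    qed
    have "Pr a b \<or> Pr b a" if "a \<in> C" "b \<in> C" for a b
      using C that unfolding Chains_def relation_of_def by blast
    then show ?thesis by (rule chain_bound[OF False sub])
  qed
qed

theorem subgrad:
  "\<exists>q. (\<forall>f\<in>V. \<forall>h\<in>V. q (\<lambda>x. f x + h x) = q f + q h) \<and> (\<forall>f\<in>V. \<forall>c. q (\<lambda>x. c * f x) = c * q f)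
      \<and> (\<forall>f\<in>V. q f \<le> g f)"
proof -
  obtain q where qS: "q \<in> Sset g" and qmin: "\<And>a. a \<in> Sset g \<Longrightarrow> Pr q a \<Longrightarrow> a = q"
    using exists_min by blast
  have q: "sl q" and qg: "\<And>f. f \<in> V \<Longrightarrow> q f \<le> g f" using qS by (auto simp: Sset_def)
  have odd: "q (\<lambda>x. - y x) \<le> - q y" if y: "y \<in> V" for y
  proof -
    define r where "r f = (if f \<in> V then (INF t\<in>{0..}. q (\<lambda>x. f x + t * y x) - t * q y) else 0)" for f
    have lb: "- q (\<lambda>x. - f x) \<le> q (\<lambda>x. f x + t * y x) - t * q y" if f: "f \<in> V" and t: "0 \<le> t" for f t
    proof -
      have "q (\<lambda>x. (f x + t * y x) + - f x) \<le> q (\<lambda>x. f x + t * y x) + q (\<lambda>x. - f x)"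
        by (rule slD2[OF q Vadd[OF f Vscale[OF y]] Vneg[OF f]])
      moreover have "q (\<lambda>x. (f x + t * y x) + - f x) = t * q y" using sl_hom[OF q y t] by simp
      ultimately show ?thesis by simp
    qed
    have bdd: "bdd_below ((\<lambda>t. q (\<lambda>x. f x + t * y x) - t * q y) ` {0..})" if f: "f \<in> V" for f
      by (rule bdd_belowI2[of _ "- q (\<lambda>x. - f x)"]) (use lb f in auto)
    have r_le: "r f \<le> q (\<lambda>x. f x + t * y x) - t * q y" if "f \<in> V" "0 \<le> t" for f t
      unfolding r_def using that by (auto intro!: cINF_lower bdd)
    have r_ge: "M \<le> r f" if "f \<in> V" "\<And>t. 0 \<le> t \<Longrightarrow> M \<le> q (\<lambda>x. f x + t * y x) - t * q y" for f M
      unfolding r_def using that by (auto intro!: cINF_greatest)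
    have r_q: "r f \<le> q f" if f: "f \<in> V" for f using r_le[OF f, of 0] by simp
    have "r \<in> Sset g"
      unfolding Sset_def
    proof (intro CollectI conjI ballI allI impI)
      show "f \<notin> V \<Longrightarrow> r f = 0" for f by (simp add: r_def)
      show "r f \<le> g f" if f: "f \<in> V" for f using r_q[OF f] qg[OF f] by simp
      show "sl r" unfolding sl_def
      proof (intro conjI ballI allI impI)
        fix f a assume f: "f \<in> V" and a: "(0::real) < a"
        have "r (\<lambda>x. a * f x) / a \<le> r f"
        proof (rule r_ge[OF f])
          fix t :: real assume t: "0 \<le> t"
          have "r (\<lambda>x. a * f x) \<le> q (\<lambda>x. a * f x + (a * t) * y x) - (a * t) * q y"
            using a t by (intro r_le Vscale f) auto
          also have "q (\<lambda>x. a * f x + (a * t) * y x) = a * q (\<lambda>x. f x + t * y x)"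
          proof -
            have "(\<lambda>x. a * f x + (a * t) * y x) = (\<lambda>x. a * (f x + t * y x))" by (auto simp: fun_eq_iff algebra_simps)
            then show ?thesis using sl_hom[OF q Vadd[OF f Vscale[OF y]], of a] a by simp
          qed
          finally have "r (\<lambda>x. a * f x) \<le> a * (q (\<lambda>x. f x + t * y x) - t * q y)"
            by (simp add: algebra_simps)
          then show "r (\<lambda>x. a * f x) / a \<le> q (\<lambda>x. f x + t * y x) - t * q y"
            using a by (simp add: divide_le_eq mult.commute)
        qed
        then show "r (\<lambda>x. a * f x) \<le> a * r f" using a by (simp add: divide_le_eq mult.commute)
      next
        fix f h assume f: "f \<in> V" and h: "h \<in> V"
        have fh: "(\<lambda>x. f x + h x) \<in> V" by (rule Vadd[OF f h])
        have key: "r (\<lambda>x. f x + h x) \<le> (q (\<lambda>x. f x + t1 * y x) - t1 * q y) + (q (\<lambda>x. h x + t2 * y x) - t2 * q y)"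
          if t1: "0 \<le> t1" and t2: "0 \<le> t2" for t1 t2
        proof -
          have "r (\<lambda>x. f x + h x) \<le> q (\<lambda>x. (f x + h x) + (t1 + t2) * y x) - (t1 + t2) * q y"
            using t1 t2 by (intro r_le fh) auto
          also have "(\<lambda>x. (f x + h x) + (t1 + t2) * y x) = (\<lambda>x. (f x + t1 * y x) + (h x + t2 * y x))"
            by (auto simp: fun_eq_iff algebra_simps)
          also have "q \<dots> \<le> q (\<lambda>x. f x + t1 * y x) + q (\<lambda>x. h x + t2 * y x)"
            by (rule slD2[OF q Vadd[OF f Vscale[OF y]] Vadd[OF h Vscale[OF y]]])
          finally show ?thesis by (simp add: algebra_simps)
        qed
        have "r (\<lambda>x. f x + h x) - r f \<le> q (\<lambda>x. h x + t2 * y x) - t2 * q y" if t2: "0 \<le> t2" for t2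
        proof -
          have "r (\<lambda>x. f x + h x) - (q (\<lambda>x. h x + t2 * y x) - t2 * q y) \<le> r f"
            by (rule r_ge[OF f]) (use key t2 in force)
          then show ?thesis by simp
        qed
        then have "r (\<lambda>x. f x + h x) - r f \<le> r h" by (intro r_ge[OF h])
        then show "r (\<lambda>x. f x + h x) \<le> r f + r h" by simp
      qed
    qed
    moreover have "Pr q r" unfolding Pr_def using r_q by blast
    ultimately have "r = q" by (rule qmin)
    have ny: "(\<lambda>x. - y x) \<in> V" by (rule Vneg[OF y])
    have "q (\<lambda>x. - y x) = r (\<lambda>x. - y x)" using \<open>r = q\<close> by simp
    also have "\<dots> \<le> q (\<lambda>x. - y x + 1 * y x) - 1 * q y" by (rule r_le[OF ny]) simp
    also have "(\<lambda>x. - y x + 1 * y x) = (\<lambda>x. 0)" by auto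
    finally show ?thesis using sl_zero[OF q] by simp
  qed
  have neg: "q (\<lambda>x. - y x) = - q y" if y: "y \<in> V" for y
    using odd[OF y] sl_lb[OF q y] by simp
  have add: "q (\<lambda>x. f x + h x) = q f + q h" if f: "f \<in> V" and h: "h \<in> V" for f h
  proof -
    have fh: "(\<lambda>x. f x + h x) \<in> V" by (rule Vadd[OF f h])
    have "q f = q (\<lambda>x. (f x + h x) + - h x)" by simp
    also have "\<dots> \<le> q (\<lambda>x. f x + h x) + q (\<lambda>x. - h x)" by (rule slD2[OF q fh Vneg[OF h]])
    finally show ?thesis using neg[OF h] slD2[OF q f h] by simp
  qed
  have hom: "q (\<lambda>x. c * f x) = c * q f" if f: "f \<in> V" for f c
  proof (cases "0 \<le> c")
    case True then show ?thesis by (rule sl_hom[OF q f])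
  next
    case False
    have "q (\<lambda>x. c * f x) = q (\<lambda>x. - ((- c) * f x))" by simp
    also have "\<dots> = - q (\<lambda>x. (- c) * f x)" by (rule neg[OF Vscale[OF f]])
    also have "\<dots> = - ((- c) * q f)" using sl_hom[OF q f, of "- c"] False by simp
    finally show ?thesis by simp
  qed
  show ?thesis using add hom qg by blast
qed

end
end

lemma CZ_fvs: assumes Z1: "\<And>x. x \<in> \<Omega> \<Longrightarrow> 1 \<le> Z x" shows "fvs (CZ \<Omega> Z)"
proof
  fix f h assume f: "f \<in> CZ \<Omega> Z" and h: "h \<in> CZ \<Omega> Z"
  obtain a where a: "\<And>x. x \<in> \<Omega> \<Longrightarrow> \<bar>f x\<bar> \<le> a * Z x" using CZ_E[OF f Z1] by metis
  obtain b where b: "\<And>x. x \<in> \<Omega> \<Longrightarrow> \<bar>h x\<bar> \<le> b * Z x" using CZ_E[OF h Z1] by metis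
  show "(\<lambda>x. f x + h x) \<in> CZ \<Omega> Z"
  proof (rule CZ_I[OF _ Z1])
    show "continuous_on \<Omega> (\<lambda>x. f x + h x)" using CZ_cont[OF f] CZ_cont[OF h] by (intro continuous_intros)
    fix x assume x: "x \<in> \<Omega>"
    have "\<bar>f x + h x\<bar> \<le> \<bar>f x\<bar> + \<bar>h x\<bar>" by (rule abs_triangle_ineq)
    also have "\<dots> \<le> (a + b) * Z x" using a[OF x] b[OF x] by (simp add: distrib_right)
    finally show "\<bar>f x + h x\<bar> \<le> (a + b) * Z x" .
  qed
next
  fix f c assume f: "f \<in> CZ \<Omega> Z"
  obtain a where a: "0 \<le> a" "\<And>x. x \<in> \<Omega> \<Longrightarrow> \<bar>f x\<bar> \<le> a * Z x" using CZ_E[OF f Z1] by metis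
  show "(\<lambda>x. c * f x) \<in> CZ \<Omega> Z"
  proof (rule CZ_I[OF _ Z1])
    show "continuous_on \<Omega> (\<lambda>x. c * f x)" using CZ_cont[OF f] by (intro continuous_intros)
    fix x assume x: "x \<in> \<Omega>"
    have "\<bar>c * f x\<bar> = \<bar>c\<bar> * \<bar>f x\<bar>" by (simp add: abs_mult)
    also have "\<dots> \<le> \<bar>c\<bar> * (a * Z x)" using a(2)[OF x] by (intro mult_left_mono) auto
    finally show "\<bar>c * f x\<bar> \<le> (\<bar>c\<bar> * a) * Z x" by (simp add: mult.assoc)
  qed
next
  show "(\<lambda>x. 0) \<in> CZ \<Omega> Z" by (rule CZ_I[where c=0]) (auto intro: continuous_on_const Z1)
qed

theorem theoremA1:
  fixes \<Omega> :: "('j::finite, 't::finite) state set"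
    and Z :: "('j, 't) state \<Rightarrow> real"
    and \<psi> :: "(('j, 't) state \<Rightarrow> real) \<Rightarrow> real"
  assumes Omega_sub: "\<Omega> \<subseteq> state_space" and Omega_ne: "\<Omega> \<noteq> {}"
    and Z_cont: "continuous_on \<Omega> Z" and Z_ge1: "\<forall>\<omega>\<in>\<Omega>. 1 \<le> Z \<omega>"
    and Z_sublevel: "\<forall>z\<ge>0. compact {\<omega>\<in>\<Omega>. Z \<omega> \<le> z}"
    and incr: "\<forall>X\<in>CZ \<Omega> Z. \<forall>Y\<in>CZ \<Omega> Z. (\<forall>\<omega>\<in>\<Omega>. Y \<omega> \<le> X \<omega>) \<longrightarrow> \<psi> Y \<le> \<psi> X"
    and conv: "\<forall>X\<in>CZ \<Omega> Z. \<forall>Y\<in>CZ \<Omega> Z. \<forall>l::real. 0 \<le> l \<and> l \<le> 1 \<longrightarrow>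
                 \<psi> (\<lambda>\<omega>. l * X \<omega> + (1 - l) * Y \<omega>) \<le> l * \<psi> X + (1 - l) * \<psi> Y"
    and cont_below: "\<forall>X\<in>CZ \<Omega> Z. \<exists>\<epsilon>>0.
                 ((\<lambda>z. \<psi> (\<lambda>\<omega>. X \<omega> + \<epsilon> * max (Z \<omega> - z) 0)) \<longlongrightarrow> \<psi> X) at_top"
  shows "\<forall>X\<in>CZ \<Omega> Z. \<exists>\<mu>\<in>caZ \<Omega> Z.
            ereal (\<psi> X) = ereal (pairing X \<mu>) - conj_CZ \<Omega> Z \<psi> \<mu> \<and>
            (\<forall>\<nu>\<in>caZ \<Omega> Z. ereal (pairing X \<nu>) - conj_CZ \<Omega> Z \<psi> \<nu> \<le> ereal (\<psi> X))"
proof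
  fix X assume X: "X \<in> CZ \<Omega> Z"
  have Z1: "\<And>x. x \<in> \<Omega> \<Longrightarrow> 1 \<le> Z x" using Z_ge1 by auto
  interpret F: fvs "CZ \<Omega> Z" by (rule CZ_fvs[OF Z1])
  define g where "g W = \<psi> (\<lambda>\<omega>. X \<omega> + W \<omega>) - \<psi> X" for W
  have XW: "(\<lambda>\<omega>. X \<omega> + W \<omega>) \<in> CZ \<Omega> Z" if "W \<in> CZ \<Omega> Z" for W using F.Vadd[OF X that] .
  have cvx: "F.cvx g"
    unfolding F.cvx_def
  proof (intro ballI allI impI)
    fix W1 W2 and l :: real assume W1: "W1 \<in> CZ \<Omega> Z" and W2: "W2 \<in> CZ \<Omega> Z" and l: "0 \<le> l \<and> l \<le> 1"
    have eq: "(\<lambda>\<omega>. X \<omega> + (l * W1 \<omega> + (1 - l) * W2 \<omega>)) = (\<lambda>\<omega>. l * (X \<omega> + W1 \<omega>) + (1 - l) * (X \<omega> + W2 \<omega>))"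
      by (auto simp: fun_eq_iff algebra_simps)
    have "\<psi> (\<lambda>\<omega>. l * (X \<omega> + W1 \<omega>) + (1 - l) * (X \<omega> + W2 \<omega>))
        \<le> l * \<psi> (\<lambda>\<omega>. X \<omega> + W1 \<omega>) + (1 - l) * \<psi> (\<lambda>\<omega>. X \<omega> + W2 \<omega>)"
      by (rule conv[rule_format, OF XW[OF W1] XW[OF W2] l])
    then show "g (\<lambda>x. l * W1 x + (1 - l) * W2 x) \<le> l * g W1 + (1 - l) * g W2"
      unfolding g_def eq by (simp add: algebra_simps)
  qed
  have g0: "g (\<lambda>x. 0) = 0" by (simp add: g_def)
  obtain q where q_add: "\<And>f h. f \<in> CZ \<Omega> Z \<Longrightarrow> h \<in> CZ \<Omega> Z \<Longrightarrow> q (\<lambda>x. f x + h x) = q f + q h"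
    and q_scale: "\<And>f c. f \<in> CZ \<Omega> Z \<Longrightarrow> q (\<lambda>x. c * f x) = c * q f"
    and q_g: "\<And>f. f \<in> CZ \<Omega> Z \<Longrightarrow> q f \<le> g f"
    using F.subgrad[OF cvx g0] by blast
  have q_pos: "0 \<le> q f" if f: "f \<in> CZ \<Omega> Z" and nn: "\<And>x. x \<in> \<Omega> \<Longrightarrow> 0 \<le> f x" for f
  proof -
    have "q (\<lambda>x. (-1) * f x) \<le> g (\<lambda>x. (-1) * f x)" by (rule q_g[OF F.Vscale[OF f]])
    also have "\<dots> \<le> 0"
    proof -
      have "\<psi> (\<lambda>\<omega>. X \<omega> + (-1) * f \<omega>) \<le> \<psi> X"
        by (rule incr[rule_format, OF X XW[OF F.Vscale[OF f, of "-1"]]]) (use nn in auto)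
      then show ?thesis by (simp add: g_def)
    qed
    finally show ?thesis using q_scale[OF f, of "-1"] by simp
  qed
  obtain \<epsilon> where \<epsilon>: "0 < \<epsilon>" and lim: "((\<lambda>z. \<psi> (\<lambda>\<omega>. X \<omega> + \<epsilon> * max (Z \<omega> - z) 0)) \<longlongrightarrow> \<psi> X) at_top"
    using cont_below X by blast
  have tlV: "(\<lambda>x. max (Z x - z) 0) \<in> CZ \<Omega> Z" for z
  proof (rule CZ_I[where c="1 + \<bar>z\<bar>"])
    show "continuous_on \<Omega> (\<lambda>x. max (Z x - z) 0)" using Z_cont by (intro continuous_intros)
    show "\<And>x. x \<in> \<Omega> \<Longrightarrow> 1 \<le> Z x" by (rule Z1)
    fix x assume x: "x \<in> \<Omega>"
    have "\<bar>z\<bar> * 1 \<le> \<bar>z\<bar> * Z x" using Z1[OF x] by (intro mult_left_mono) auto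
    then show "\<bar>max (Z x - z) 0\<bar> \<le> (1 + \<bar>z\<bar>) * Z x" using Z1[OF x]
      by (simp add: distrib_right max_def abs_le_iff)
  qed
  have tail: "((\<lambda>z. q (\<lambda>x. max (Z x - z) 0)) \<longlongrightarrow> 0) at_top"
  proof (rule tendsto_sandwich[OF _ _ tendsto_const])
    show "\<forall>\<^sub>F z in at_top. 0 \<le> q (\<lambda>x. max (Z x - z) 0)"
      by (intro always_eventually allI q_pos[OF tlV]) auto
    show "\<forall>\<^sub>F z in at_top. q (\<lambda>x. max (Z x - z) 0) \<le> (\<psi> (\<lambda>\<omega>. X \<omega> + \<epsilon> * max (Z \<omega> - z) 0) - \<psi> X) / \<epsilon>"
    proof (intro always_eventually allI)
      fix z
      have "\<epsilon> * q (\<lambda>x. max (Z x - z) 0) = q (\<lambda>x. \<epsilon> * max (Z x - z) 0)" by (rule q_scale[OF tlV, symmetric])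
      also have "\<dots> \<le> g (\<lambda>x. \<epsilon> * max (Z x - z) 0)" by (rule q_g[OF F.Vscale[OF tlV]])
      finally show "q (\<lambda>x. max (Z x - z) 0) \<le> (\<psi> (\<lambda>\<omega>. X \<omega> + \<epsilon> * max (Z \<omega> - z) 0) - \<psi> X) / \<epsilon>"
        using \<epsilon> by (simp add: g_def le_divide_eq mult.commute)
    qed
    have "((\<lambda>z. (\<psi> (\<lambda>\<omega>. X \<omega> + \<epsilon> * max (Z \<omega> - z) 0) - \<psi> X) / \<epsilon>) \<longlongrightarrow> (\<psi> X - \<psi> X) / \<epsilon>) at_top"
      by (intro tendsto_divide tendsto_diff lim tendsto_const) (use \<epsilon> in simp)
    then show "((\<lambda>z. (\<psi> (\<lambda>\<omega>. X \<omega> + \<epsilon> * max (Z \<omega> - z) 0) - \<psi> X) / \<epsilon>) \<longlongrightarrow> 0) at_top" by simp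
  qed
  interpret R: riesz \<Omega> Z q
  proof
    show "continuous_on \<Omega> Z" by (rule Z_cont)
    show "\<And>x. x \<in> \<Omega> \<Longrightarrow> 1 \<le> Z x" by (rule Z1)
    show "\<And>z. 0 \<le> z \<Longrightarrow> compact {x \<in> \<Omega>. Z x \<le> z}" using Z_sublevel by auto
    show "\<And>f g. f \<in> CZ \<Omega> Z \<Longrightarrow> g \<in> CZ \<Omega> Z \<Longrightarrow> q (\<lambda>x. f x + g x) = q f + q g" by (rule q_add)
    show "\<And>f c. f \<in> CZ \<Omega> Z \<Longrightarrow> q (\<lambda>x. c * f x) = c * q f" by (rule q_scale)
    show "\<And>f. f \<in> CZ \<Omega> Z \<Longrightarrow> (\<And>x. x \<in> \<Omega> \<Longrightarrow> 0 \<le> f x) \<Longrightarrow> 0 \<le> q f" by (rule q_pos)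
    show "((\<lambda>z. q (\<lambda>x. max (Z x - z) 0)) \<longlongrightarrow> 0) at_top" by (rule tail)
  qed
  have mu: "R.mu \<in> caZ \<Omega> Z" and pair: "\<And>f. f \<in> CZ \<Omega> Z \<Longrightarrow> pairing f R.mu = q f"
    using R.riesz_rep by auto
  have le: "q Y - \<psi> Y \<le> q X - \<psi> X" if Y: "Y \<in> CZ \<Omega> Z" for Y
  proof -
    have YX: "(\<lambda>x. Y x + (-1) * X x) \<in> CZ \<Omega> Z" by (rule F.Vadd[OF Y F.Vscale[OF X]])
    have "q Y - q X = q (\<lambda>x. Y x + (-1) * X x)" using q_add[OF Y F.Vscale[OF X, of "-1"]] q_scale[OF X, of "-1"] by simp
    also have "\<dots> \<le> g (\<lambda>x. Y x + (-1) * X x)" by (rule q_g[OF YX])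
    also have "\<dots> = \<psi> Y - \<psi> X" by (simp add: g_def)
    finally show ?thesis by simp
  qed
  have conj: "conj_CZ \<Omega> Z \<psi> R.mu = ereal (q X - \<psi> X)"
    unfolding conj_CZ_def
  proof (rule antisym)
    show "(SUP Y\<in>CZ \<Omega> Z. ereal (pairing Y R.mu - \<psi> Y)) \<le> ereal (q X - \<psi> X)"
      by (rule SUP_least) (use le pair in simp)
    have "ereal (pairing X R.mu - \<psi> X) \<le> (SUP Y\<in>CZ \<Omega> Z. ereal (pairing Y R.mu - \<psi> Y))"
      by (rule SUP_upper[OF X])
    then show "ereal (q X - \<psi> X) \<le> (SUP Y\<in>CZ \<Omega> Z. ereal (pairing Y R.mu - \<psi> Y))" using pair[OF X] by simp
  qed
  show "\<exists>\<mu>\<in>caZ \<Omega> Z. ereal (\<psi> X) = ereal (pairing X \<mu>) - conj_CZ \<Omega> Z \<psi> \<mu> \<and>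
            (\<forall>\<nu>\<in>caZ \<Omega> Z. ereal (pairing X \<nu>) - conj_CZ \<Omega> Z \<psi> \<nu> \<le> ereal (\<psi> X))"
  proof (intro bexI[OF _ mu] conjI ballI)
    show "ereal (\<psi> X) = ereal (pairing X R.mu) - conj_CZ \<Omega> Z \<psi> R.mu" using conj pair[OF X] by simp
    fix \<nu> assume "\<nu> \<in> caZ \<Omega> Z"
    have c: "ereal (pairing X \<nu> - \<psi> X) \<le> conj_CZ \<Omega> Z \<psi> \<nu>"
      unfolding conj_CZ_def by (rule SUP_upper[OF X])
    show "ereal (pairing X \<nu>) - conj_CZ \<Omega> Z \<psi> \<nu> \<le> ereal (\<psi> X)"
      using c by (cases "conj_CZ \<Omega> Z \<psi> \<nu>") auto
  qed
qed


end
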